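(* Let $\Omega\subset\mathbb{R}^d$ be compact, $T,N\in\mathbb{N}$, let $F_{\tilde\xi_{t,n}}:\mathbb{R}^d\to\mathbb{R}^{d'}$ be affine maps and $\tilde\theta_{t,n}$ unmasked attention parameters with $d_{\mathrm{in}}(\tilde\theta_{t,n})=d'$, $d_{\mathrm{head}}(\tilde\theta_{t,n})=k(\tilde\theta_{t,n})=1$, $H(\tilde\theta_{t,n})=d'$, and let $G(\mu,x)=\sum_{n=1}^N(\Gamma_{\tilde\theta_{1,n}}\diamond F_{\tilde\xi_{1,n}})(\mu,x)\odot\cdots\odot(\Gamma_{\tilde\theta_{T,n}}\diamond F_{\tilde\xi_{T,n}})(\mu,x)$. Then for every $\varepsilon>0$ there exist $L$, unmasked attention parameters $\theta_1,\dots,\theta_L$ and MLPs $F_{\xi_1},\dots,F_{\xi_L}$ such that $$\forall(\mu,x)\in\mathcal{P}(\Omega)\times\Omega,\quad|G(\mu,x)-F_{\xi_L}\diamond\Gamma_{\theta_L}\diamond\cdots\diamond F_{\xi_1}\diamond\Gamma_{\theta_1}(\mu,x)|\le\varepsilon,$$ with $d_{\mathrm{in}}(\theta_\ell)\le d+3d'$, $d_{\mathrm{head}}(\theta_\ell)=k(\theta_\ell)=1$, $H(\theta_\ell)\le d'$.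
   Context: $\odot$ is componentwise multiplication. Unmasked attention: for $\theta=(W^h,K^h,Q^h,V^h)_{h=1}^H$ with $K^h,Q^h\in\mathbb{R}^{k\times d_{\mathrm{in}}}$, $V^h\in\mathbb{R}^{d_{\mathrm{head}}\times d_{\mathrm{in}}}$, $W^h\in\mathbb{R}^{d_{\mathrm{in}}\times d_{\mathrm{head}}}$ (sizes $d_{\mathrm{in}}(\theta),d_{\mathrm{head}}(\theta),k(\theta),H(\theta)$), $\Gamma_\theta(\mu,x)=x+\sum_{h=1}^HW^h\int\frac{\exp(\frac1{\sqrt k}\langle Q^hx,K^hy\rangle)}{\int\exp(\frac1{\sqrt k}\langle Q^hx,K^hz\rangle)d\mu(z)}V^hy\,d\mu(y)$. An MLP is $A_K\circ\rho\circ\cdots\circ\rho\circ A_1$ with affine $A_j$ and componentwise ReLU $\rho$ (affine maps allowed), context-free: $F(\mu,x)=F(x)$. Composition: $(\Gamma_2\diamond\Gamma_1)(\mu,x)=\Gamma_2(\Gamma_1(\mu)_\sharp\mu,\Gamma_1(\mu,x))$ with $\Gamma_1(\mu)=\Gamma_1(\mu,\cdot)$. Dimensions compatible: $d_{\mathrm{in}}(\theta_1)=d$, $F_{\xi_\ell}:\mathbb{R}^{d_{\mathrm{in}}(\theta_\ell)}\to\mathbb{R}^{d_{\mathrm{in}}(\theta_{\ell+1})}$, $F_{\xi_L}$ maps into $\mathbb{R}^{d'}$. *)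

theory Defs
  imports "HOL-Probability.Probability"
begin

text \<open>Vectors of R^n are represented as functions nat => real, only the
  coordinates i < n being relevant (all constructions below return 0 outside).\<close>

type_synonym vec = "nat \<Rightarrow> real"

text \<open>Indexing: W h i j (i < d_in, j < d_head),
  V h j l (j < d_head, l < d_in), Q h a j and K h a j (a < k, j < d_in).\<close>
record attn_param =
  a_din :: nat
  a_dhead :: nat
  a_k :: nat
  a_H :: nat
  a_W :: "nat \<Rightarrow> nat \<Rightarrow> nat \<Rightarrow> real"
  a_K :: "nat \<Rightarrow> nat \<Rightarrow> nat \<Rightarrow> real"
  a_Q :: "nat \<Rightarrow> nat \<Rightarrow> nat \<Rightarrow> real"
  a_V :: "nat \<Rightarrow> nat \<Rightarrow> nat \<Rightarrow> real"

definition att_score :: "attn_param \<Rightarrow> nat \<Rightarrow> vec \<Rightarrow> vec \<Rightarrow> real" where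
  "att_score \<theta> h x y = (1 / sqrt (real (a_k \<theta>))) *
     (\<Sum>a<a_k \<theta>. (\<Sum>j<a_din \<theta>. a_Q \<theta> h a j * x j) * (\<Sum>j<a_din \<theta>. a_K \<theta> h a j * y j))"

definition Gamma :: "attn_param \<Rightarrow> vec measure \<Rightarrow> vec \<Rightarrow> vec" where
  "Gamma \<theta> \<mu> x = (\<lambda>i. if i < a_din \<theta> then
      x i + (\<Sum>h<a_H \<theta>. \<Sum>j<a_dhead \<theta>. a_W \<theta> h i j *
         (\<integral>y. (exp (att_score \<theta> h x y) / (\<integral>z. exp (att_score \<theta> h x z) \<partial>\<mu>))
                 * (\<Sum>l<a_din \<theta>. a_V \<theta> h j l * y l) \<partial>\<mu>))
    else 0)"

record affmap =
  af_in :: nat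
  af_out :: nat
  af_A :: "nat \<Rightarrow> nat \<Rightarrow> real"
  af_b :: "nat \<Rightarrow> real"

definition aff_eval :: "affmap \<Rightarrow> vec \<Rightarrow> vec" where
  "aff_eval f x = (\<lambda>i. if i < af_out f then (\<Sum>j<af_in f. af_A f i j * x j) + af_b f i else 0)"

definition relu :: "vec \<Rightarrow> vec" where
  "relu v = (\<lambda>i. max 0 (v i))"

text \<open>An MLP A_K o rho o ... o rho o A_1 is given by the list [A_1,...,A_K].\<close>
fun mlp_eval :: "affmap list \<Rightarrow> vec \<Rightarrow> vec" where
  "mlp_eval [] x = x"
| "mlp_eval [a] x = aff_eval a x"
| "mlp_eval (a # b # as) x = mlp_eval (b # as) (relu (aff_eval a x))"

definition mlp_wf :: "affmap list \<Rightarrow> bool" where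
  "mlp_wf \<xi> \<longleftrightarrow> \<xi> \<noteq> [] \<and> (\<forall>i. Suc i < length \<xi> \<longrightarrow> af_out (\<xi> ! i) = af_in (\<xi> ! Suc i))"

definition mlp_in :: "affmap list \<Rightarrow> nat" where
  "mlp_in \<xi> = af_in (hd \<xi>)"

definition mlp_out :: "affmap list \<Rightarrow> nat" where
  "mlp_out \<xi> = af_out (last \<xi>)"

definition ctx_comp :: "(vec measure \<Rightarrow> vec \<Rightarrow> vec) \<Rightarrow> (vec measure \<Rightarrow> vec \<Rightarrow> vec)
                        \<Rightarrow> vec measure \<Rightarrow> vec \<Rightarrow> vec" where
  "ctx_comp G2 G1 \<mu> x = G2 (distr \<mu> borel (G1 \<mu>)) (G1 \<mu> x)"

text \<open>The network F_{xi_L} <> Gamma_{theta_L} <> ... <> F_{xi_1} <> Gamma_{theta_1},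
  given by the list [(theta_1,xi_1),...,(theta_L,xi_L)]; MLPs are context-free.\<close>
fun tnet :: "(attn_param \<times> affmap list) list \<Rightarrow> vec measure \<Rightarrow> vec \<Rightarrow> vec" where
  "tnet [] = (\<lambda>\<mu> x. x)"
| "tnet ((\<theta>, \<xi>) # ps) = ctx_comp (tnet ps) (ctx_comp (\<lambda>\<mu>. mlp_eval \<xi>) (Gamma \<theta>))"

definition dims_compatible :: "nat \<Rightarrow> nat \<Rightarrow> (attn_param \<times> affmap list) list \<Rightarrow> bool" where
  "dims_compatible d d' ps \<longleftrightarrow> ps \<noteq> [] \<and> a_din (fst (hd ps)) = d \<and>
     (\<forall>l < length ps. mlp_wf (snd (ps ! l)) \<and> mlp_in (snd (ps ! l)) = a_din (fst (ps ! l)) \<and>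
        mlp_out (snd (ps ! l)) = (if Suc l < length ps then a_din (fst (ps ! Suc l)) else d'))"

definition prob_measures_on :: "vec set \<Rightarrow> vec measure set" where
  "prob_measures_on \<Omega> = {\<mu>. prob_space \<mu> \<and> sets \<mu> = sets borel \<and> emeasure \<mu> \<Omega> = 1}"

definition vnorm :: "nat \<Rightarrow> vec \<Rightarrow> real" where
  "vnorm n v = sqrt (\<Sum>i<n. (v i)\<^sup>2)"

end

theory Submission
  imports Defs
begin

lemma meas_snd_coord:
  assumes sets: "sets \<nu> = sets (borel :: vec measure)"
  shows "(\<lambda>p::'a\<times>vec. snd p j) \<in> borel_measurable (M \<Otimes>\<^sub>M \<nu>)"
proof -
  have mnu: "(\<lambda>y::vec. y j) \<in> borel_measurable \<nu>"
    unfolding measurable_cong_sets[OF sets refl] by (rule measurable_product_coordinates)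
  show ?thesis by (rule measurable_compose[OF measurable_snd mnu])
qed

lemma meas_fst_coord:
  shows "(\<lambda>p::vec\<times>'a. fst p j) \<in> borel_measurable (borel \<Otimes>\<^sub>M \<nu>)"
  by (rule measurable_compose[OF measurable_fst measurable_product_coordinates])

lemma att_score_meas2:
  assumes sets: "sets \<nu> = sets (borel :: vec measure)"
  shows "(\<lambda>p::vec\<times>vec. att_score \<theta> h (fst p) (snd p)) \<in> borel_measurable (borel \<Otimes>\<^sub>M \<nu>)"
  unfolding att_score_def
  by (intro borel_measurable_times borel_measurable_sum borel_measurable_const
        meas_snd_coord[OF sets] meas_fst_coord)

lemma exp_meas[intro]: "f \<in> borel_measurable M \<Longrightarrow> (\<lambda>x. exp (f x :: real)) \<in> borel_measurable M"
  by (rule measurable_compose[OF _ borel_measurable_exp])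

lemma Gamma_meas:
  assumes fin: "finite_measure \<nu>" and sets: "sets \<nu> = sets (borel :: vec measure)"
  shows "Gamma \<theta> \<nu> \<in> borel_measurable borel"
proof (rule measurable_coordinatewise_then_product)
  fix i
  interpret finite_measure \<nu> by fact
  have Z: "(\<lambda>w. \<integral>z. exp (att_score \<theta> h w z) \<partial>\<nu>) \<in> borel_measurable borel" for h
    by (rule borel_measurable_lebesgue_integral)
       (simp add: case_prod_beta' exp_meas att_score_meas2[OF sets])
  have Z2: "(\<lambda>p::vec\<times>vec. \<integral>z. exp (att_score \<theta> h (fst p) z) \<partial>\<nu>) \<in> borel_measurable (borel \<Otimes>\<^sub>M \<nu>)" for h
    by (rule measurable_compose[OF measurable_fst Z])
  have I: "(\<lambda>w. \<integral>y. (exp (att_score \<theta> h w y) / (\<integral>z. exp (att_score \<theta> h w z) \<partial>\<nu>))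
                 * (\<Sum>l<a_din \<theta>. a_V \<theta> h j l * y l) \<partial>\<nu>) \<in> borel_measurable borel" for h j
    by (rule borel_measurable_lebesgue_integral)
      (unfold case_prod_beta', intro borel_measurable_times borel_measurable_divide exp_meas
         att_score_meas2[OF sets] Z2 borel_measurable_sum borel_measurable_const meas_snd_coord[OF sets])
  show "(\<lambda>x. Gamma \<theta> \<nu> x i) \<in> borel_measurable borel"
  proof (cases "i < a_din \<theta>")
    case True
    show ?thesis
      unfolding Gamma_def if_P[OF True]
      by (intro borel_measurable_add borel_measurable_sum borel_measurable_times
       borel_measurable_const I measurable_product_coordinates)
  qed (simp add: Gamma_def)
qed

lemma aff_meas: "aff_eval f \<in> borel_measurable borel"
proof (rule measurable_coordinatewise_then_product)
  fix i show "(\<lambda>x. aff_eval f x i) \<in> borel_measurable borel"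
    by (cases "i < af_out f") (simp_all add: aff_eval_def)
qed

lemma relu_meas: "relu \<in> borel_measurable borel"
proof (rule measurable_coordinatewise_then_product)
  fix i show "(\<lambda>x. relu x i) \<in> borel_measurable borel"
    unfolding relu_def by (intro borel_measurable_max borel_measurable_const measurable_product_coordinates)
qed

lemma mlp_meas: "mlp_eval \<xi> \<in> borel_measurable borel"
proof (induction \<xi> rule: induct_list012)
  case 1 then show ?case by simp
next
  case (2 a) then show ?case using aff_meas by simp
next
  case (3 a b as)
  have e: "mlp_eval (a # b # as) = mlp_eval (b # as) \<circ> (relu \<circ> aff_eval a)" by (rule ext) simp
  show ?case unfolding e by (rule measurable_comp[OF measurable_comp[OF aff_meas relu_meas] 3(2)])
qed

fun run :: "(attn_param \<times> affmap list) list \<Rightarrow> vec measure \<Rightarrow> (vec \<Rightarrow> vec) \<Rightarrow> vec \<Rightarrow> vec" where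
  "run [] \<mu> s = s"
| "run ((\<theta>, \<xi>) # ps) \<mu> s = run ps \<mu> (\<lambda>z. mlp_eval \<xi> (Gamma \<theta> (distr \<mu> borel s) (s z)))"

lemma tnet_run:
  assumes "prob_space \<mu>" "sets \<mu> = sets (borel :: vec measure)"
  shows "s \<in> borel_measurable borel \<Longrightarrow> tnet ps (distr \<mu> borel s) (s x) = run ps \<mu> s x"
proof (induction ps arbitrary: s)
  case Nil then show ?case by simp
next
  case (Cons p ps)
  obtain \<theta> \<xi> where p: "p = (\<theta>, \<xi>)" by fastforce
  define \<nu> where "\<nu> = distr \<mu> borel s"
  have sm: "s \<in> measurable \<mu> borel" unfolding measurable_cong_sets[OF assms(2) refl] using Cons.prems .
  have pn: "prob_space \<nu>" unfolding \<nu>_def by (rule prob_space.prob_space_distr[OF assms(1) sm])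
  have sn: "sets \<nu> = sets (borel :: vec measure)" unfolding \<nu>_def by simp
  have fm: "finite_measure \<nu>" using pn by (simp add: prob_space_def)
  define L where "L = (\<lambda>x. mlp_eval \<xi> (Gamma \<theta> \<nu> x))"
  have Lm: "L \<in> borel_measurable borel"
  proof -
    have "L = mlp_eval \<xi> \<circ> Gamma \<theta> \<nu>" unfolding L_def by auto
    then show ?thesis using measurable_comp[OF Gamma_meas[OF fm sn] mlp_meas]
      by simp
  qed
  have "tnet (p # ps) \<nu> (s x) = tnet ps (distr \<nu> borel L) (L (s x))"
  proof -
    have "ctx_comp (\<lambda>\<mu>. mlp_eval \<xi>) (Gamma \<theta>) \<nu> = L" by (rule ext) (simp add: ctx_comp_def L_def)
    then show ?thesis unfolding p by (simp add: ctx_comp_def)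
  qed
  also have "distr \<nu> borel L = distr \<mu> borel (L \<circ> s)"
    unfolding \<nu>_def by (rule distr_distr[OF Lm sm])
  also have "tnet ps (distr \<mu> borel (L \<circ> s)) (L (s x)) = run ps \<mu> (L \<circ> s) x"
    using Cons.IH[of "L \<circ> s"] measurable_comp[OF Cons.prems Lm] by (simp add: comp_def)
  finally have "tnet (p # ps) \<nu> (s x) = run ps \<mu> (L \<circ> s) x" .
  moreover have "run (p # ps) \<mu> s = run ps \<mu> (L \<circ> s)"
    unfolding p L_def \<nu>_def comp_def by simp
  ultimately show ?case unfolding \<nu>_def by simp
qed

lemma tnet_run0:
  assumes "prob_space \<mu>" "sets \<mu> = sets (borel :: vec measure)"
  shows "tnet ps \<mu> x = run ps \<mu> (\<lambda>x. x) x"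
proof -
  have "distr \<mu> borel (\<lambda>x. x) = \<mu>" by (rule distr_id2) (simp add: assms(2))
  then show ?thesis using tnet_run[OF assms, of "\<lambda>x. x" ps x] by simp
qed


lemma sum_pairs: fixes g :: "nat \<Rightarrow> 'a::comm_monoid_add" shows "(\<Sum>j<2*n. g j) = (\<Sum>l<n. g (2*l) + g (2*l+1))"
  by (induction n) (simp_all add: algebra_simps)

lemma sum_add_split: fixes g :: "nat \<Rightarrow> 'a::comm_monoid_add" and a b :: nat shows "(\<Sum>j<a+b. g j) = (\<Sum>j<a. g j) + (\<Sum>j<b. g (a+j))"
  by (induction b) (simp_all add: algebra_simps)

lemma sum_block: fixes h :: "nat \<Rightarrow> 'a::comm_monoid_add" and m K :: nat shows "(\<Sum>q<m*K. h q) = (\<Sum>i<m. \<Sum>k<K. h (i*K+k))"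
proof (induction m)
  case 0 then show ?case by simp
next
  case (Suc m)
  have "(\<Sum>q<Suc m*K. h q) = (\<Sum>q<m*K + K. h q)" by (simp add: add.commute)
  also have "\<dots> = (\<Sum>q<m*K. h q) + (\<Sum>k<K. h (m*K+k))" by (rule sum_add_split)
  finally show ?case using Suc by simp
qed

lemma sum_delta_lt: fixes n l :: nat and w :: "nat \<Rightarrow> real" shows "l < n \<Longrightarrow> (\<Sum>j<n. (if j = l then c else 0) * w j) = (c * w l :: real)"
proof -
  assume l: "l < n"
  have "(\<Sum>j<n. (if j = l then c else 0) * w j) = (\<Sum>j<n. if j = l then c * w l else 0)"
    by (rule sum.cong) auto
  also have "\<dots> = c * w l" using l by (simp add: sum.delta)
  finally show ?thesis .
qed

definition mapp :: "nat \<Rightarrow> (nat \<Rightarrow> real) \<Rightarrow> (nat \<Rightarrow> real) \<Rightarrow> real \<Rightarrow> real \<Rightarrow> real" where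
  "mapp K u c a b = (\<Sum>k<K. c k * (max 0 (a + b - u k) - max 0 (a - b - u k)))"

definition mlpA1 :: "nat \<Rightarrow> nat \<Rightarrow> nat \<Rightarrow> (nat \<Rightarrow> nat) \<Rightarrow> (nat \<Rightarrow> nat) \<Rightarrow> (nat \<Rightarrow> real) \<Rightarrow> affmap" where
  "mlpA1 nin m K pP pF u = \<lparr>af_in = nin, af_out = 2*nin + 2*(m*K),
     af_A = (\<lambda>j l. if j < 2*nin then (if l = j div 2 then (if even j then 1 else -1) else 0)
            else (if l = pP (((j - 2*nin) div 2) div K) then 1 else 0)
               + (if l = pF (((j - 2*nin) div 2) div K) then (if even (j - 2*nin) then 1 else -1) else 0)),
     af_b = (\<lambda>j. if j < 2*nin then 0 else - u (((j - 2*nin) div 2) mod K))\<rparr>"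

definition mlpA2 :: "nat \<Rightarrow> nat \<Rightarrow> nat \<Rightarrow> nat \<Rightarrow> (nat \<Rightarrow> nat \<Rightarrow> real) \<Rightarrow> (nat \<Rightarrow> nat \<Rightarrow> real)
     \<Rightarrow> (nat \<Rightarrow> real) \<Rightarrow> (nat \<Rightarrow> real) \<Rightarrow> affmap" where
  "mlpA2 nin m K nout C M c b = \<lparr>af_in = 2*nin + 2*(m*K), af_out = nout,
     af_A = (\<lambda>oi j. if j < 2*nin then (if even j then C oi (j div 2) else - C oi (j div 2))
            else (if even (j - 2*nin) then M oi (((j - 2*nin) div 2) div K) * c (((j - 2*nin) div 2) mod K)
                  else - (M oi (((j - 2*nin) div 2) div K) * c (((j - 2*nin) div 2) mod K)))),
     af_b = b\<rparr>"

definition gmlp where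
  "gmlp nin m K pP pF u nout C M c b = [mlpA1 nin m K pP pF u, mlpA2 nin m K nout C M c b]"

lemma hid_copy:
  assumes "l < nin"
  shows "aff_eval (mlpA1 nin m K pP pF u) w (2*l) = w l"
    and "aff_eval (mlpA1 nin m K pP pF u) w (2*l+1) = - w l"
proof -
  have "(\<Sum>j<nin. (if j = l then 1 else 0) * w j) = w l" using sum_delta_lt[OF assms, of 1 w] by simp
  then show "aff_eval (mlpA1 nin m K pP pF u) w (2*l) = w l"
    using assms by (simp add: aff_eval_def mlpA1_def)
  have "(\<Sum>j<nin. (if j = l then -1 else 0) * w j) = - w l" using sum_delta_lt[OF assms, of "-1" w] by simp
  then show "aff_eval (mlpA1 nin m K pP pF u) w (2*l+1) = - w l"
    using assms by (simp add: aff_eval_def mlpA1_def)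
qed

lemma hid_gen:
  assumes "2*nin \<le> j" "j < 2*nin + 2*(m*K)" "pP ((j - 2*nin) div 2 div K) < nin" "pF ((j - 2*nin) div 2 div K) < nin"
  shows "aff_eval (mlpA1 nin m K pP pF u) w j = w (pP ((j - 2*nin) div 2 div K))
      + (if even (j - 2*nin) then 1 else -1) * w (pF ((j - 2*nin) div 2 div K)) - u ((j - 2*nin) div 2 mod K)"
proof -
  define P where "P = pP ((j - 2*nin) div 2 div K)"
  define F where "F = pF ((j - 2*nin) div 2 div K)"
  define sg :: real where "sg = (if even (j - 2*nin) then 1 else -1)"
  have "(\<Sum>l<nin. ((if l = P then 1 else 0) + (if l = F then sg else 0)) * w l)
        = (\<Sum>l<nin. (if l = P then 1 else 0) * w l) + (\<Sum>l<nin. (if l = F then sg else 0) * w l)"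
    by (simp add: distrib_right sum.distrib)
  also have "\<dots> = w P + sg * w F" using sum_delta_lt[of P nin 1 w] sum_delta_lt[of F nin sg w] assms(3,4)
    unfolding P_def F_def by simp
  finally have e: "(\<Sum>l<nin. ((if l = P then 1 else 0) + (if l = F then sg else 0)) * w l) = w P + sg * w F" .
  have A: "af_A (mlpA1 nin m K pP pF u) j l = (if l = P then 1 else 0) + (if l = F then sg else 0)" for l
    using assms(1) unfolding mlpA1_def P_def F_def sg_def by auto
  have "aff_eval (mlpA1 nin m K pP pF u) w j
     = (\<Sum>l<nin. af_A (mlpA1 nin m K pP pF u) j l * w l) + af_b (mlpA1 nin m K pP pF u) j"
    using assms(2) by (simp add: aff_eval_def mlpA1_def)
  also have "\<dots> = w P + sg * w F - u ((j - 2*nin) div 2 mod K)"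
    unfolding A e using assms(1) by (simp add: mlpA1_def)
  finally show ?thesis unfolding P_def F_def sg_def .
qed

lemma lt_block: fixes i k m K :: nat assumes "i < m" "k < K" shows "i*K+k < m*K"
proof -
  have "i*K+k < (i+1)*K" using assms(2) by simp
  also have "(i+1)*K \<le> m*K" using assms(1) by (intro mult_le_mono1) simp
  finally show ?thesis .
qed

lemma hid_mul:
  assumes "i < m" "k < K" "pP i < nin" "pF i < nin"
  shows "aff_eval (mlpA1 nin m K pP pF u) w (2*nin + 2*(i*K+k)) = w (pP i) + w (pF i) - u k"
    and "aff_eval (mlpA1 nin m K pP pF u) w (2*nin + 2*(i*K+k) + 1) = w (pP i) - w (pF i) - u k"
proof -
  have lt: "i*K+k < m*K" by (rule lt_block[OF assms(1,2)])
  have d1: "(i*K+k) div K = i" "(i*K+k) mod K = k" using assms(2) by auto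
  show "aff_eval (mlpA1 nin m K pP pF u) w (2*nin + 2*(i*K+k)) = w (pP i) + w (pF i) - u k"
    using hid_gen[of nin "2*nin + 2*(i*K+k)" m K pP pF u w] lt d1 assms by simp
  show "aff_eval (mlpA1 nin m K pP pF u) w (2*nin + 2*(i*K+k) + 1) = w (pP i) - w (pF i) - u k"
    using hid_gen[of nin "2*nin + 2*(i*K+k) + 1" m K pP pF u w] lt d1 assms by simp
qed

lemma max_id: "max 0 (x::real) - max 0 (- x) = x" by auto

lemma gmlp_eval:
  assumes P: "\<forall>i<m. pP i < nin \<and> pF i < nin"
  shows "mlp_eval (gmlp nin m K pP pF u nout C M c b) w oi = (if oi < nout then
     (\<Sum>l<nin. C oi l * w l) + (\<Sum>i<m. M oi i * mapp K u c (w (pP i)) (w (pF i))) + b oi else 0)"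
proof (cases "oi < nout")
  case False then show ?thesis by (simp add: gmlp_def aff_eval_def mlpA2_def)
next
  case True
  define A2 where "A2 = mlpA2 nin m K nout C M c b"
  define r where "r = relu (aff_eval (mlpA1 nin m K pP pF u) w)"
  have ev: "mlp_eval (gmlp nin m K pP pF u nout C M c b) w oi = (\<Sum>j<2*nin + 2*(m*K). af_A A2 oi j * r j) + b oi"
    using True by (simp add: gmlp_def aff_eval_def A2_def r_def mlpA2_def)
  have s1: "(\<Sum>j<2*nin. af_A A2 oi j * r j) = (\<Sum>l<nin. C oi l * w l)"
    unfolding sum_pairs
  proof (rule sum.cong[OF refl])
    fix l assume l: "l \<in> {..<nin}"
    have a: "af_A A2 oi (2*l) = C oi l" "af_A A2 oi (2*l+1) = - C oi l" using l by (auto simp: A2_def mlpA2_def)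
    have "r (2*l) = max 0 (w l)" "r (2*l+1) = max 0 (- w l)"
      using l hid_copy[of l nin m K pP pF u w] by (auto simp: r_def relu_def)
    then show "af_A A2 oi (2*l) * r (2*l) + af_A A2 oi (2*l+1) * r (2*l+1) = C oi l * w l"
      unfolding a by (simp add: right_diff_distrib[symmetric] max_id)
  qed
  have s2: "(\<Sum>j<2*(m*K). af_A A2 oi (2*nin + j) * r (2*nin + j)) = (\<Sum>i<m. M oi i * mapp K u c (w (pP i)) (w (pF i)))"
    unfolding sum_pairs[where n="m*K"] sum_block[where m=m and K=K] mapp_def sum_distrib_left
  proof (rule sum.cong[OF refl], rule sum.cong[OF refl])
    fix i k assume i: "i \<in> {..<m}" and k: "k \<in> {..<K}"
    have d1: "(i*K+k) div K = i" "(i*K+k) mod K = k" using k by auto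
    have a: "af_A A2 oi (2*nin + 2*(i*K+k)) = M oi i * c k" "af_A A2 oi (2*nin + (2*(i*K+k)+1)) = - (M oi i * c k)"
      using d1 by (auto simp: A2_def mlpA2_def)
    have "r (2*nin + 2*(i*K+k)) = max 0 (w (pP i) + w (pF i) - u k)"
         "r (2*nin + (2*(i*K+k)+1)) = max 0 (w (pP i) - w (pF i) - u k)"
      using i k P hid_mul[of i m k K pP nin pF u w] by (auto simp: r_def relu_def add.assoc)
    then show "af_A A2 oi (2*nin + 2*(i*K+k)) * r (2*nin + 2*(i*K+k))
      + af_A A2 oi (2*nin + (2*(i*K+k)+1)) * r (2*nin + (2*(i*K+k)+1))
      = M oi i * (c k * (max 0 (w (pP i) + w (pF i) - u k) - max 0 (w (pP i) - w (pF i) - u k)))"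
      unfolding a by (simp add: algebra_simps)
  qed
  show ?thesis using True unfolding ev sum_add_split s1 s2 by simp
qed


definition ccoef :: "real \<Rightarrow> real \<Rightarrow> nat \<Rightarrow> real" where
  "ccoef a0 h k = (if k = 0 then 2*a0 + h else 2*h)"

definition pw :: "nat \<Rightarrow> real \<Rightarrow> real \<Rightarrow> real \<Rightarrow> real" where
  "pw K a0 h v = a0^2 + (\<Sum>k<K. ccoef a0 h k * max 0 (v - (a0 + real k * h)))"

lemma pw_closed: "a0^2 + (\<Sum>k<Suc j. ccoef a0 h k * (v - (a0 + real k * h)))
   = v^2 + (v - (a0 + real j * h)) * ((a0 + real (Suc j) * h) - v)"
proof (induction j)
  case 0 then show ?case by (simp add: ccoef_def power2_eq_square algebra_simps)
next
  case (Suc j)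
  have "a0^2 + (\<Sum>k<Suc (Suc j). ccoef a0 h k * (v - (a0 + real k * h)))
     = (a0^2 + (\<Sum>k<Suc j. ccoef a0 h k * (v - (a0 + real k * h)))) + 2*h*(v - (a0 + real (Suc j) * h))"
    by (simp add: ccoef_def)
  also have "\<dots> = v^2 + (v - (a0 + real (Suc j) * h)) * ((a0 + real (Suc (Suc j)) * h) - v)"
    unfolding Suc by (simp add: power2_eq_square algebra_simps)
  finally show ?case .
qed

lemma grid_exists:
  assumes "0 < h" "0 < K" "a0 \<le> v" "v \<le> a0 + real K * h"
  shows "\<exists>j<K. a0 + real j * h \<le> v \<and> v \<le> a0 + real (Suc j) * h"
  using assms(2,4)
proof (induction K)
  case 0 then show ?case by simp
next
  case (Suc K)
  show ?case
  proof (cases "v \<le> a0 + real K * h \<and> 0 < K")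
    case True then show ?thesis using Suc.IH by (metis less_SucI)
  next
    case False
    then have "a0 + real K * h \<le> v" using assms(3) by (cases "K = 0") auto
    then show ?thesis using Suc.prems(2) by (intro exI[of _ K]) auto
  qed
qed

lemma pw_err:
  assumes "0 < h" "0 < K" "a0 \<le> v" "v \<le> a0 + real K * h"
  shows "0 \<le> pw K a0 h v - v^2 \<and> pw K a0 h v - v^2 \<le> h^2/4"
proof -
  obtain j where j: "j < K" "a0 + real j * h \<le> v" "v \<le> a0 + real (Suc j) * h"
    using grid_exists[OF assms] by blast
  have "(\<Sum>k<K. ccoef a0 h k * max 0 (v - (a0 + real k * h)))
      = (\<Sum>k<Suc j. ccoef a0 h k * max 0 (v - (a0 + real k * h)))"
  proof (rule sum.mono_neutral_right)
    show "\<forall>i\<in>{..<K} - {..<Suc j}. ccoef a0 h i * max 0 (v - (a0 + real i * h)) = 0"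
    proof
      fix i assume "i \<in> {..<K} - {..<Suc j}"
      then have "Suc j \<le> i" by auto
      then have "real (Suc j) * h \<le> real i * h" using assms(1) by (intro mult_right_mono) auto
      then show "ccoef a0 h i * max 0 (v - (a0 + real i * h)) = 0" using j(3) by auto
    qed
  qed (use j in auto)
  also have "\<dots> = (\<Sum>k<Suc j. ccoef a0 h k * (v - (a0 + real k * h)))"
  proof (rule sum.cong[OF refl])
    fix k assume "k \<in> {..<Suc j}"
    then have "real k * h \<le> real j * h" using assms(1) by (intro mult_right_mono) auto
    then show "ccoef a0 h k * max 0 (v - (a0 + real k * h)) = ccoef a0 h k * (v - (a0 + real k * h))"
      using j(2) by auto
  qed
  finally have "pw K a0 h v = v^2 + (v - (a0 + real j * h)) * ((a0 + real (Suc j) * h) - v)"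
    unfolding pw_def using pw_closed by simp
  moreover
  define x where "x = v - (a0 + real j * h)"
  have "(a0 + real (Suc j) * h) - v = h - x" unfolding x_def by (simp add: algebra_simps)
  moreover have "0 \<le> x" "x \<le> h" using j unfolding x_def by (auto simp: algebra_simps)
  moreover have "x * (h - x) \<le> h^2/4"
  proof -
    have "0 \<le> (h - 2*x)^2" by simp
    then show ?thesis by (simp add: power2_eq_square algebra_simps)
  qed
  ultimately show ?thesis unfolding x_def[symmetric] by auto
qed

lemma mapp_pw: "mapp K (\<lambda>k. a0 + real k * h) (\<lambda>k. ccoef a0 h k / 4) a b
   = (pw K a0 h (a + b) - pw K a0 h (a - b)) / 4"
proof -
  have "(pw K a0 h (a + b) - pw K a0 h (a - b)) / 4 = (\<Sum>k<K. ccoef a0 h k * max 0 (a + b - (a0 + real k * h))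
       - ccoef a0 h k * max 0 (a - b - (a0 + real k * h))) / 4"
    by (simp add: pw_def sum_subtractf)
  also have "\<dots> = mapp K (\<lambda>k. a0 + real k * h) (\<lambda>k. ccoef a0 h k / 4) a b"
    unfolding mapp_def sum_divide_distrib by (rule sum.cong) (simp_all add: right_diff_distrib diff_divide_distrib)
  finally show ?thesis by simp
qed

lemma mapp_approx:
  assumes "0 < A" "0 < \<delta>"
  shows "\<exists>K u c. \<forall>a b. \<bar>a\<bar> \<le> A \<longrightarrow> \<bar>b\<bar> \<le> A \<longrightarrow> \<bar>mapp K u c a b - a*b\<bar> \<le> \<delta>"
proof -
  define m where "m = min 1 (16*\<delta>)"
  have m: "0 < m" "m \<le> 1" "m \<le> 16*\<delta>" using assms unfolding m_def by auto
  obtain K :: nat where K: "4*A/m < real K" using reals_Archimedean2 by blast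
  have Kp: "0 < K" using K m assms by (metis divide_pos_pos mult_pos_pos of_nat_0_less_iff order_less_trans zero_less_numeral)
  define h where "h = 4*A / real K"
  have hp: "0 < h" unfolding h_def using Kp assms by simp
  have hm: "h < m" unfolding h_def using K Kp m by (simp add: field_simps)
  have hK: "real K * h = 4*A" unfolding h_def using Kp by simp
  have h2: "h^2/16 \<le> \<delta>"
  proof -
    have "h^2 \<le> h" using hp hm m by (simp add: power2_eq_square mult_le_cancel_right1 less_imp_le)
    then show ?thesis using hm m by simp
  qed
  show ?thesis
  proof (intro exI allI impI)
    fix a b :: real assume a: "\<bar>a\<bar> \<le> A" and b: "\<bar>b\<bar> \<le> A"
    have r1: "-(2*A) \<le> a + b" "a + b \<le> -(2*A) + real K * h" using a b hK by auto
    have r2: "-(2*A) \<le> a - b" "a - b \<le> -(2*A) + real K * h" using a b hK by auto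
    note e1 = pw_err[OF hp Kp r1] and e2 = pw_err[OF hp Kp r2]
    have "mapp K (\<lambda>k. -(2*A) + real k * h) (\<lambda>k. ccoef (-(2*A)) h k / 4) a b - a*b
       = ((pw K (-(2*A)) h (a+b) - (a+b)^2) - (pw K (-(2*A)) h (a-b) - (a-b)^2)) / 4"
      unfolding mapp_pw by (simp add: power2_eq_square field_simps)
    also have "\<bar>\<dots>\<bar> \<le> h^2/16"
    proof -
      define P where "P = pw K (-(2*A)) h (a+b) - (a+b)^2"
      define Q where "Q = pw K (-(2*A)) h (a-b) - (a-b)^2"
      have "0 \<le> P" "P \<le> h^2/4" "0 \<le> Q" "Q \<le> h^2/4" using e1 e2 unfolding P_def Q_def by auto
      then have x1: "(P - Q)/4 \<le> h^2/16" by (simp add: field_simps)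
      from \<open>0 \<le> P\<close> \<open>Q \<le> h^2/4\<close> have x2: "- ((P - Q)/4) \<le> h^2/16" by (simp add: field_simps)
      from x1 x2 have "\<bar>(P - Q)/4\<bar> \<le> h^2/16" unfolding abs_le_iff by blast
      then show ?thesis unfolding P_def Q_def .
    qed
    finally show "\<bar>mapp K (\<lambda>k. -(2*A) + real k * h) (\<lambda>k. ccoef (-(2*A)) h k / 4) a b - a*b\<bar> \<le> \<delta>"
      using h2 by linarith
  qed
qed


definition shiftA :: "nat \<Rightarrow> nat \<Rightarrow> attn_param \<Rightarrow> attn_param" where
  "shiftA off D \<theta> = \<lparr>a_din = D, a_dhead = a_dhead \<theta>, a_k = a_k \<theta>, a_H = a_H \<theta>,
     a_W = (\<lambda>h i j. if off \<le> i \<and> i < D then a_W \<theta> h (i - off) j else 0),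
     a_K = (\<lambda>h a j. if off \<le> j \<and> j < D then a_K \<theta> h a (j - off) else 0),
     a_Q = (\<lambda>h a j. if off \<le> j \<and> j < D then a_Q \<theta> h a (j - off) else 0),
     a_V = (\<lambda>h j l. if off \<le> l \<and> l < D then a_V \<theta> h j (l - off) else 0)\<rparr>"

definition trunc :: "nat \<Rightarrow> nat \<Rightarrow> vec \<Rightarrow> vec" where
  "trunc off n w = (\<lambda>j. if j < n then w (off + j) else 0)"

lemma sum_shift: "(\<Sum>j<off+n. (if off \<le> j \<and> j < off+n then g (j-off) else 0) * (w j :: real))
   = (\<Sum>j<n. g j * trunc off n w j)"
  unfolding sum_add_split by (simp add: trunc_def)

lemma sum_shift': "(\<Sum>j<off+n. (if off \<le> j then g (j-off) else 0) * (w j :: real))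
   = (\<Sum>j<n. g j * trunc off n w j)"
  unfolding sum_add_split by (simp add: trunc_def)

lemma att_score_shift:
  assumes "a_din \<theta> = n"
  shows "att_score (shiftA off (off+n) \<theta>) h w y = att_score \<theta> h (trunc off n w) (trunc off n y)"
  unfolding att_score_def using assms by (simp add: shiftA_def sum_shift sum_shift')

lemma V_shift:
  assumes "a_din \<theta> = n"
  shows "(\<Sum>l<a_din (shiftA off (off+n) \<theta>). a_V (shiftA off (off+n) \<theta>) h j l * y l) = (\<Sum>l<a_din \<theta>. a_V \<theta> h j l * trunc off n y l)"
  using assms by (simp add: shiftA_def sum_shift sum_shift')

lemma trunc_meas: "trunc off n \<in> borel_measurable borel"
proof (rule measurable_coordinatewise_then_product)
  fix i show "(\<lambda>x. trunc off n x i) \<in> borel_measurable borel"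
    by (cases "i < n") (simp_all add: trunc_def)
qed

lemma att_score_meas1: "(\<lambda>y. att_score \<theta> h x y) \<in> borel_measurable borel"
  unfolding att_score_def
  by (intro borel_measurable_times borel_measurable_sum borel_measurable_const measurable_product_coordinates)

lemma Gamma_shift:
  assumes sets: "sets \<nu> = sets (borel :: vec measure)" and n: "a_din \<theta> = n" and i: "i < n"
  shows "Gamma (shiftA off (off+n) \<theta>) \<nu> w (off+i) = Gamma \<theta> (distr \<nu> borel (trunc off n)) (trunc off n w) i"
proof -
  let ?\<theta> = "shiftA off (off+n) \<theta>"
  let ?t = "trunc off n"
  have tm: "?t \<in> measurable \<nu> borel" unfolding measurable_cong_sets[OF sets refl] by (rule trunc_meas)
  have Z: "(\<integral>z. exp (att_score ?\<theta> h w z) \<partial>\<nu>) = (\<integral>z. exp (att_score \<theta> h (?t w) z) \<partial>distr \<nu> borel ?t)" for h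
    unfolding att_score_shift[OF n]
    by (rule integral_distr[OF tm, symmetric]) (intro exp_meas att_score_meas1)
  have I: "(\<integral>y. (exp (att_score ?\<theta> h w y) / (\<integral>z. exp (att_score ?\<theta> h w z) \<partial>\<nu>))
                 * (\<Sum>l<a_din ?\<theta>. a_V ?\<theta> h j l * y l) \<partial>\<nu>)
         = (\<integral>y. (exp (att_score \<theta> h (?t w) y) / (\<integral>z. exp (att_score \<theta> h (?t w) z) \<partial>distr \<nu> borel ?t))
                 * (\<Sum>l<a_din \<theta>. a_V \<theta> h j l * y l) \<partial>distr \<nu> borel ?t)" for h j
    unfolding Z unfolding V_shift[OF n] att_score_shift[OF n]
    by (rule integral_distr[OF tm, symmetric])
       (intro borel_measurable_times borel_measurable_divide exp_meas att_score_meas1 borel_measurable_const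
          borel_measurable_sum measurable_product_coordinates)
  have W: "a_W ?\<theta> h (off+i) j = a_W \<theta> h i j" for h j using i by (simp add: shiftA_def)
  have tw: "?t w i = w (off+i)" using i by (simp add: trunc_def)
  show ?thesis
    unfolding Gamma_def using i n I W tw by (simp add: shiftA_def)
qed

lemma Gamma_shift_low:
  assumes "i < off" "a_din \<theta> = n"
  shows "Gamma (shiftA off (off+n) \<theta>) \<nu> w i = w i"
  using assms unfolding Gamma_def by (simp add: shiftA_def)


lemma coord_cont[continuous_intros]: "continuous_on S (\<lambda>x::vec. x i)"
  by (rule continuous_on_subset[OF continuous_on_product_coordinates]) simp

lemma cont_bounded:
  fixes f :: "vec \<Rightarrow> real"
  assumes "compact \<Omega>" "continuous_on \<Omega> f"
  shows "\<exists>B. \<forall>z\<in>\<Omega>. \<bar>f z\<bar> \<le> B"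
proof -
  have "compact (f ` \<Omega>)" by (rule compact_continuous_image[OF assms(2,1)])
  then have "bounded (f ` \<Omega>)" by (rule compact_imp_bounded)
  then show ?thesis unfolding bounded_real by auto
qed

lemma finite_bound:
  fixes f :: "nat \<Rightarrow> 'a \<Rightarrow> real"
  assumes "\<forall>j<n. \<exists>b. \<forall>z\<in>S. \<bar>f j z\<bar> \<le> b"
  shows "\<exists>B\<ge>0. \<forall>j<n. \<forall>z\<in>S. \<bar>f j z\<bar> \<le> B"
proof -
  from assms obtain b where b: "\<forall>j<n. \<forall>z\<in>S. \<bar>f j z\<bar> \<le> b j" by metis
  have "\<forall>j<n. \<forall>z\<in>S. \<bar>f j z\<bar> \<le> (\<Sum>j<n. \<bar>b j\<bar>)"
  proof (intro allI impI ballI)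
    fix j z assume "j < n" "z \<in> S"
    then have "\<bar>f j z\<bar> \<le> \<bar>b j\<bar>" using b by force
    also have "\<bar>b j\<bar> \<le> (\<Sum>j<n. \<bar>b j\<bar>)" using \<open>j < n\<close> by (intro member_le_sum) auto
    finally show "\<bar>f j z\<bar> \<le> (\<Sum>j<n. \<bar>b j\<bar>)" .
  qed
  then show ?thesis by (intro exI[of _ "\<Sum>j<n. \<bar>b j\<bar>"]) (auto intro: sum_nonneg)
qed

lemma aff_cont[continuous_intros]: "continuous_on S (\<lambda>z. aff_eval F z j)"
  by (cases "j < af_out F") (simp_all add: aff_eval_def continuous_intros)

lemma aff_bound:
  assumes "compact \<Omega>"
  shows "\<exists>C\<ge>0. \<forall>z\<in>\<Omega>. \<forall>j. \<bar>aff_eval F z j\<bar> \<le> C"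
proof -
  have "\<forall>j<af_out F. \<exists>b. \<forall>z\<in>\<Omega>. \<bar>aff_eval F z j\<bar> \<le> b"
    using cont_bounded[OF assms] aff_cont by blast
  from finite_bound[OF this] obtain B where B: "B \<ge> 0" "\<forall>j<af_out F. \<forall>z\<in>\<Omega>. \<bar>aff_eval F z j\<bar> \<le> B" by blast
  have "\<bar>aff_eval F z j\<bar> \<le> B" if "z \<in> \<Omega>" for z j
    using B that by (cases "j < af_out F") (auto simp: aff_eval_def)
  then show ?thesis using B(1) by blast
qed

lemma softmax_bound:
  fixes s g :: "vec \<Rightarrow> real"
  assumes ps: "prob_space \<mu>" and ae: "AE z in \<mu>. z \<in> \<Omega>"
    and sm: "s \<in> borel_measurable \<mu>" and gm: "g \<in> borel_measurable \<mu>"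
    and sb: "\<forall>z\<in>\<Omega>. \<bar>s z\<bar> \<le> S" and gb: "\<forall>z\<in>\<Omega>. \<bar>g z\<bar> \<le> V" and V: "0 \<le> V"
  shows "\<bar>\<integral>z. (exp (s z) / (\<integral>z'. exp (s z') \<partial>\<mu>)) * g z \<partial>\<mu>\<bar> \<le> V"
proof -
  interpret prob_space \<mu> by fact
  define Z where "Z = (\<integral>z'. exp (s z') \<partial>\<mu>)"
  have Ei: "integrable \<mu> (\<lambda>z. exp (s z))"
  proof (rule integrable_const_bound[where B="exp S"])
    show "AE x in \<mu>. norm (exp (s x)) \<le> exp S" using ae
      by eventually_elim (use sb in auto)
  qed (use sm in \<open>rule exp_meas\<close>)
  have Z0: "0 \<le> Z" unfolding Z_def by (rule integral_nonneg_AE) auto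
  show ?thesis
  proof (cases "Z = 0")
    case True then show ?thesis using V unfolding Z_def[symmetric] by simp
  next
    case False
    then have Zp: "0 < Z" using Z0 by simp
    have "\<bar>\<integral>z. (exp (s z) / Z) * g z \<partial>\<mu>\<bar> \<le> (\<integral>z. \<bar>(exp (s z) / Z) * g z\<bar> \<partial>\<mu>)" by (rule integral_abs_bound)
    also have "\<dots> \<le> (\<integral>z. (exp (s z) / Z) * V \<partial>\<mu>)"
    proof (rule integral_mono_AE')
      show "integrable \<mu> (\<lambda>z. exp (s z) / Z * V)" using Ei by simp
      show "AE z in \<mu>. \<bar>exp (s z) / Z * g z\<bar> \<le> exp (s z) / Z * V" using ae
      proof eventually_elim
        case (elim z)
        then have "\<bar>g z\<bar> \<le> V" using gb by auto
        then show ?case using Zp by (simp add: abs_mult mult_left_mono divide_right_mono)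
      qed
      show "AE z in \<mu>. 0 \<le> exp (s z) / Z * V" using Zp V by simp
    qed
    also have "\<dots> = V" using Zp unfolding Z_def by simp
    finally show ?thesis unfolding Z_def .
  qed
qed

lemma att_cont[continuous_intros]: "continuous_on S (\<lambda>z. att_score \<theta> h x (aff_eval F z))"
  unfolding att_score_def by (intro continuous_intros)

lemma AE_Omega: "\<mu> \<in> prob_measures_on \<Omega> \<Longrightarrow> AE z in \<mu>. z \<in> \<Omega>"
  unfolding prob_measures_on_def using prob_space.AE_prob_1 by (force simp: measure_def)

lemma fac_bound:
  assumes cpt: "compact \<Omega>"
  shows "\<exists>B\<ge>0. \<forall>\<mu>\<in>prob_measures_on \<Omega>. \<forall>z\<in>\<Omega>. \<forall>i. \<bar>Gamma \<theta> (distr \<mu> borel (aff_eval F)) (aff_eval F z) i\<bar> \<le> B"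
proof -
  obtain CF where CF: "CF \<ge> 0" "\<forall>z\<in>\<Omega>. \<forall>j. \<bar>aff_eval F z j\<bar> \<le> CF" using aff_bound[OF cpt] by blast
  define Vb where "Vb h j = (\<Sum>l<a_din \<theta>. \<bar>a_V \<theta> h j l\<bar>) * CF" for h j
  have Vb0: "0 \<le> Vb h j" for h j unfolding Vb_def using CF(1) by (auto intro: sum_nonneg)
  define Bi where "Bi i = (\<Sum>h<a_H \<theta>. \<Sum>j<a_dhead \<theta>. \<bar>a_W \<theta> h i j\<bar> * Vb h j)" for i
  have Bi0: "0 \<le> Bi i" for i unfolding Bi_def using Vb0 by (auto intro!: sum_nonneg)
  define B where "B = CF + (\<Sum>i<a_din \<theta>. Bi i)"
  have "\<bar>Gamma \<theta> (distr \<mu> borel (aff_eval F)) (aff_eval F z) i\<bar> \<le> B"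
    if \<mu>: "\<mu> \<in> prob_measures_on \<Omega>" and z: "z \<in> \<Omega>" for \<mu> z i
  proof (cases "i < a_din \<theta>")
    case False then show ?thesis unfolding B_def Gamma_def using CF(1) Bi0 by (simp add: sum_nonneg)
  next
    case True
    have ps: "prob_space \<mu>" and sets: "sets \<mu> = sets borel" using \<mu> unfolding prob_measures_on_def by auto
    have Fm: "aff_eval F \<in> measurable \<mu> borel" unfolding measurable_cong_sets[OF sets refl] by (rule aff_meas)
    define x where "x = aff_eval F z"
    define I where "I h j = (\<integral>y. (exp (att_score \<theta> h x y) / (\<integral>z. exp (att_score \<theta> h x z) \<partial>distr \<mu> borel (aff_eval F)))
                 * (\<Sum>l<a_din \<theta>. a_V \<theta> h j l * y l) \<partial>distr \<mu> borel (aff_eval F))" for h j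
    have Ib: "\<bar>I h j\<bar> \<le> Vb h j" for h j
    proof -
      obtain S where S: "\<forall>z\<in>\<Omega>. \<bar>att_score \<theta> h x (aff_eval F z)\<bar> \<le> S"
        using cont_bounded[OF cpt att_cont] by blast
      have Z: "(\<integral>z. exp (att_score \<theta> h x z) \<partial>distr \<mu> borel (aff_eval F)) = (\<integral>z. exp (att_score \<theta> h x (aff_eval F z)) \<partial>\<mu>)"
        by (rule integral_distr[OF Fm]) (intro exp_meas att_score_meas1)
      have "I h j = (\<integral>z. (exp (att_score \<theta> h x (aff_eval F z)) / (\<integral>z'. exp (att_score \<theta> h x (aff_eval F z')) \<partial>\<mu>))
                 * (\<Sum>l<a_din \<theta>. a_V \<theta> h j l * aff_eval F z l) \<partial>\<mu>)"
        unfolding I_def Z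
        by (rule integral_distr[OF Fm])
           (intro borel_measurable_times borel_measurable_divide exp_meas att_score_meas1 borel_measurable_const
              borel_measurable_sum measurable_product_coordinates)
      also have "\<bar>\<dots>\<bar> \<le> Vb h j"
      proof (rule softmax_bound[OF ps AE_Omega[OF \<mu>], where S=S])
        show "(\<lambda>z. att_score \<theta> h x (aff_eval F z)) \<in> borel_measurable \<mu>"
          by (rule measurable_compose[OF Fm att_score_meas1])
        show "(\<lambda>z. \<Sum>l<a_din \<theta>. a_V \<theta> h j l * aff_eval F z l) \<in> borel_measurable \<mu>"
          by (rule measurable_compose[OF Fm])
             (intro borel_measurable_times borel_measurable_const borel_measurable_sum measurable_product_coordinates)
        show "\<forall>z\<in>\<Omega>. \<bar>att_score \<theta> h x (aff_eval F z)\<bar> \<le> S" by (rule S)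
        show "\<forall>z\<in>\<Omega>. \<bar>\<Sum>l<a_din \<theta>. a_V \<theta> h j l * aff_eval F z l\<bar> \<le> Vb h j"
        proof
          fix z assume z: "z \<in> \<Omega>"
          have "\<bar>\<Sum>l<a_din \<theta>. a_V \<theta> h j l * aff_eval F z l\<bar> \<le> (\<Sum>l<a_din \<theta>. \<bar>a_V \<theta> h j l * aff_eval F z l\<bar>)"
            by (rule sum_abs)
          also have "\<dots> \<le> (\<Sum>l<a_din \<theta>. \<bar>a_V \<theta> h j l\<bar> * CF)"
            using CF z by (intro sum_mono) (simp add: abs_mult mult_left_mono)
          finally show "\<bar>\<Sum>l<a_din \<theta>. a_V \<theta> h j l * aff_eval F z l\<bar> \<le> Vb h j"
            unfolding Vb_def by (simp add: sum_distrib_right)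
        qed
        show "0 \<le> Vb h j" by (rule Vb0)
      qed
      finally show ?thesis .
    qed
    have "Gamma \<theta> (distr \<mu> borel (aff_eval F)) (aff_eval F z) i = x i + (\<Sum>h<a_H \<theta>. \<Sum>j<a_dhead \<theta>. a_W \<theta> h i j * I h j)"
      using True unfolding Gamma_def I_def x_def by simp
    also have "\<bar>\<dots>\<bar> \<le> CF + Bi i"
    proof -
      have "\<bar>\<Sum>h<a_H \<theta>. \<Sum>j<a_dhead \<theta>. a_W \<theta> h i j * I h j\<bar> \<le> (\<Sum>h<a_H \<theta>. \<bar>\<Sum>j<a_dhead \<theta>. a_W \<theta> h i j * I h j\<bar>)"
        by (rule sum_abs)
      also have "\<dots> \<le> (\<Sum>h<a_H \<theta>. \<Sum>j<a_dhead \<theta>. \<bar>a_W \<theta> h i j * I h j\<bar>)"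
        by (intro sum_mono sum_abs)
      also have "\<dots> \<le> Bi i" unfolding Bi_def
        by (intro sum_mono) (simp add: abs_mult mult_left_mono Ib)
      finally show ?thesis using CF z unfolding x_def by (smt (verit))
    qed
    also have "CF + Bi i \<le> B" unfolding B_def using True Bi0 by (simp add: member_le_sum)
    finally show ?thesis .
  qed
  moreover have "0 \<le> B" unfolding B_def using CF(1) Bi0 by (simp add: sum_nonneg)
  ultimately show ?thesis by blast
qed


lemma sum_delta_if:
  fixes g :: "nat \<Rightarrow> real"
  assumes "i0 < n"
  shows "(\<Sum>i<n. (if i = i0 \<and> P then 1 else 0) * g i) = (if P then g i0 else 0)"
  using sum_delta_lt[OF assms, of 1 g] by (cases P) simp_all

lemma sum_lowpart:
  fixes w :: "nat \<Rightarrow> real"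
  shows "(\<Sum>l<d+e. (if l < d then a l else 0) * w l) = (\<Sum>l<d. a l * w l)"
  unfolding sum_add_split by simp

locale net =
  fixes d d' T N :: nat and Ft :: "nat \<Rightarrow> nat \<Rightarrow> affmap" and \<theta>t :: "nat \<Rightarrow> nat \<Rightarrow> attn_param"
    and K :: nat and u c :: "nat \<Rightarrow> real"
  assumes T0: "0 < T" and N0: "0 < N"
    and Fdim: "\<forall>t<T. \<forall>n<N. af_in (Ft t n) = d \<and> af_out (Ft t n) = d'"
    and \<theta>dim: "\<forall>t<T. \<forall>n<N. a_din (\<theta>t t n) = d' \<and> a_dhead (\<theta>t t n) = 1 \<and> a_k (\<theta>t t n) = 1
                      \<and> a_H (\<theta>t t n) = d'"
begin

definition "D = d + 3*d'"
definition "pP = (\<lambda>i. d + d' + i)"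
definition "pF = (\<lambda>i. d + 2*d' + i)"
definition "tk k = k mod T"
definition "nk k = k div T"
definition "lastt k \<longleftrightarrow> k mod T = T - 1"

definition "idA = \<lparr>a_din = d, a_dhead = 1, a_k = 1, a_H = 0, a_W = (\<lambda>_ _ _. 0),
   a_K = (\<lambda>_ _ _. 0), a_Q = (\<lambda>_ _ _. 0), a_V = (\<lambda>_ _ _. 0)\<rparr>"

definition "C0 oi l = (if oi < d then (if l = oi then 1 else 0)
   else if d + 2*d' \<le> oi \<and> oi < D then af_A (Ft 0 0) (oi - (d + 2*d')) l else 0)"
definition "b0 oi = (if d + d' \<le> oi \<and> oi < d + 2*d' then 1
   else if d + 2*d' \<le> oi \<and> oi < D then af_b (Ft 0 0) (oi - (d + 2*d')) else 0)"
definition "\<xi>0 = gmlp d 0 K pP pF u D C0 (\<lambda>_ _. 0) c b0"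

definition "Ck k oi l = (if oi < d + d' then (if l = oi then 1 else 0)
   else if d + 2*d' \<le> oi \<and> oi < D then (if l < d then af_A (Ft (tk (Suc k)) (nk (Suc k))) (oi - (d + 2*d')) l else 0)
   else 0)"
definition "Mk k oi i = (if d \<le> oi \<and> oi < d + d' then (if i = oi - d \<and> lastt k then 1 else 0)
   else if d + d' \<le> oi \<and> oi < d + 2*d' then (if i = oi - (d + d') \<and> \<not> lastt k then 1 else 0) else 0)"
definition "bk k oi = (if d + d' \<le> oi \<and> oi < d + 2*d' then (if lastt k then 1 else 0)
   else if d + 2*d' \<le> oi \<and> oi < D then af_b (Ft (tk (Suc k)) (nk (Suc k))) (oi - (d + 2*d')) else 0)"
definition "Cf oi l = (if l = d + oi then 1 else 0)"
definition "Mf oi i = (if i = oi then 1 else 0)"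

definition "\<xi>k k = (if Suc k < T*N then gmlp D d' K pP pF u D (Ck k) (Mk k) c (bk k)
                    else gmlp D d' K pP pF u d' Cf Mf c (\<lambda>_. 0))"
definition "\<theta>k k = shiftA (d + 2*d') D (\<theta>t (tk k) (nk k))"

definition "netw = (idA, \<xi>0) # map (\<lambda>k. (\<theta>k k, \<xi>k k)) [0..<T*N]"

lemma tk_nk_lt: "k < T*N \<Longrightarrow> tk k < T \<and> nk k < N"
  unfolding tk_def nk_def using T0 by (simp add: less_mult_imp_div_less mult.commute)

lemma aff_F: "t < T \<Longrightarrow> n < N \<Longrightarrow> i < d' \<Longrightarrow>
   aff_eval (Ft t n) w i = (\<Sum>l<d. af_A (Ft t n) i l * w l) + af_b (Ft t n) i"
  using Fdim by (simp add: aff_eval_def)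

lemma E0: "mlp_eval \<xi>0 w oi = (if oi < d then w oi else if oi < d + d' then 0 else if oi < d + 2*d' then 1
    else if oi < D then aff_eval (Ft 0 0) w (oi - (d + 2*d')) else 0)"
proof -
  have e: "mlp_eval \<xi>0 w oi = (if oi < D then (\<Sum>l<d. C0 oi l * w l) + b0 oi else 0)"
    unfolding \<xi>0_def by (subst gmlp_eval) simp_all
  show ?thesis
  proof (cases "oi < d")
    case True then show ?thesis unfolding e using sum_delta_lt[OF True, of 1 w] by (simp add: C0_def b0_def D_def)
  next
    case False
    show ?thesis
    proof (cases "oi < d + 2*d'")
      case True then show ?thesis unfolding e using False by (simp add: C0_def b0_def D_def)
    next
      case False2: False
      show ?thesis
      proof (cases "oi < D")
        case True
        have "oi - (d + 2*d') < d'" using True False2 by (simp add: D_def)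
        then show ?thesis unfolding e using False False2 True aff_F[OF T0 N0] by (simp add: C0_def b0_def)
      qed (use False2 in \<open>simp add: e\<close>)
    qed
  qed
qed


lemma pPF_lt: "i < d' \<Longrightarrow> pP i < D \<and> pF i < D"
  unfolding pP_def pF_def D_def by simp

lemma Ek:
  assumes k: "Suc k < T*N"
  shows "mlp_eval (\<xi>k k) w oi = (if oi < d then w oi
    else if oi < d + d' then w oi + (if lastt k then mapp K u c (w (pP (oi - d))) (w (pF (oi - d))) else 0)
    else if oi < d + 2*d' then (if lastt k then 1 else mapp K u c (w (pP (oi - (d+d')))) (w (pF (oi - (d+d')))))
    else if oi < D then aff_eval (Ft (tk (Suc k)) (nk (Suc k))) w (oi - (d + 2*d'))
    else 0)"
proof -
  define mm where "mm i = mapp K u c (w (pP i)) (w (pF i))" for i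
  have e: "mlp_eval (\<xi>k k) w oi = (if oi < D then (\<Sum>l<D. Ck k oi l * w l) + (\<Sum>i<d'. Mk k oi i * mm i) + bk k oi else 0)"
  proof -
    have "\<xi>k k = gmlp D d' K pP pF u D (Ck k) (Mk k) c (bk k)" using k by (simp add: \<xi>k_def)
    then show ?thesis unfolding mm_def by (simp add: gmlp_eval pPF_lt)
  qed
  have nx: "tk (Suc k) < T" "nk (Suc k) < N" using tk_nk_lt[OF k] by auto
  show ?thesis
  proof (cases "oi < d + d'")
    case True
    have oD: "oi < D" using True by (simp add: D_def)
    have C: "(\<Sum>l<D. Ck k oi l * w l) = w oi"
    proof -
      have "(\<Sum>l<D. Ck k oi l * w l) = (\<Sum>l<D. (if l = oi then 1 else 0) * w l)"
        by (rule sum.cong) (simp_all add: Ck_def True)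
      then show ?thesis using sum_delta_lt[OF oD, of 1 w] by simp
    qed
    show ?thesis
    proof (cases "oi < d")
      case True2: True
      have "(\<Sum>i<d'. Mk k oi i * mm i) = 0" using True2 by (intro sum.neutral) (auto simp: Mk_def)
      then show ?thesis unfolding e C mm_def using True2 oD by (simp add: bk_def)
    next
      case False
      have i0: "oi - d < d'" using True False by simp
      have "(\<Sum>i<d'. Mk k oi i * mm i) = (\<Sum>i<d'. (if i = oi - d \<and> lastt k then 1 else 0) * mm i)"
        using True False by (intro sum.cong) (auto simp: Mk_def)
      also have "\<dots> = (if lastt k then mm (oi - d) else 0)" by (rule sum_delta_if[OF i0])
      finally show ?thesis unfolding e C mm_def using True False oD by (simp add: bk_def)
    qed
  next
    case False
    show ?thesis
    proof (cases "oi < d + 2*d'")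
      case True
      have oD: "oi < D" using True by (simp add: D_def)
      have i0: "oi - (d+d') < d'" using True False by simp
      have C: "(\<Sum>l<D. Ck k oi l * w l) = 0" using True False by (intro sum.neutral) (auto simp: Ck_def)
      have "(\<Sum>i<d'. Mk k oi i * mm i) = (\<Sum>i<d'. (if i = oi - (d+d') \<and> \<not> lastt k then 1 else 0) * mm i)"
        using True False by (intro sum.cong) (auto simp: Mk_def)
      also have "\<dots> = (if \<not> lastt k then mm (oi - (d+d')) else 0)" by (rule sum_delta_if[OF i0])
      finally show ?thesis unfolding e C mm_def using True False oD by (simp add: bk_def)
    next
      case False2: False
      show ?thesis
      proof (cases "oi < D")
        case True
        have i0: "oi - (d + 2*d') < d'" using True False2 by (simp add: D_def)
        have M: "(\<Sum>i<d'. Mk k oi i * mm i) = 0" using False False2 by (intro sum.neutral) (auto simp: Mk_def)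
        have "(\<Sum>l<D. Ck k oi l * w l) = (\<Sum>l<d + 3*d'. (if l < d then af_A (Ft (tk (Suc k)) (nk (Suc k))) (oi - (d + 2*d')) l else 0) * w l)"
          using False False2 True by (intro sum.cong) (auto simp: Ck_def D_def)
        also have "\<dots> = (\<Sum>l<d. af_A (Ft (tk (Suc k)) (nk (Suc k))) (oi - (d + 2*d')) l * w l)"
          by (rule sum_lowpart)
        finally show ?thesis unfolding e M using False False2 True aff_F[OF nx i0] by (simp add: bk_def)
      qed (use False False2 in \<open>simp add: e\<close>)
    qed
  qed
qed

lemma Ef:
  assumes k: "Suc k = T*N"
  shows "mlp_eval (\<xi>k k) w oi = (if oi < d' then w (d + oi) + mapp K u c (w (pP oi)) (w (pF oi)) else 0)"
proof -
  define mm where "mm i = mapp K u c (w (pP i)) (w (pF i))" for i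
  have e: "mlp_eval (\<xi>k k) w oi = (if oi < d' then (\<Sum>l<D. Cf oi l * w l) + (\<Sum>i<d'. Mf oi i * mm i) else 0)"
  proof -
    have "\<xi>k k = gmlp D d' K pP pF u d' Cf Mf c (\<lambda>_. 0)" using k by (simp add: \<xi>k_def)
    then show ?thesis unfolding mm_def by (simp add: gmlp_eval pPF_lt)
  qed
  show ?thesis
  proof (cases "oi < d'")
    case True
    have l: "d + oi < D" using True by (simp add: D_def)
    have "(\<Sum>l<D. Cf oi l * w l) = w (d + oi)" using sum_delta_lt[OF l, of 1 w] by (simp add: Cf_def)
    moreover have "(\<Sum>i<d'. Mf oi i * mm i) = mm oi" using sum_delta_lt[OF True, of 1 mm] by (simp add: Mf_def)
    ultimately show ?thesis unfolding e mm_def using True by simp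
  qed (simp add: e)
qed

end

lemma gmlp_wf: "mlp_wf (gmlp nin m K pP pF u nout C M c b) \<and> mlp_in (gmlp nin m K pP pF u nout C M c b) = nin
   \<and> mlp_out (gmlp nin m K pP pF u nout C M c b) = nout"
  unfolding gmlp_def mlp_wf_def mlp_in_def mlp_out_def by (simp add: mlpA1_def mlpA2_def nth_Cons')

context net begin

lemma idx_next:
  shows "\<not> lastt k \<Longrightarrow> tk (Suc k) = Suc (tk k) \<and> nk (Suc k) = nk k"
    and "lastt k \<Longrightarrow> tk (Suc k) = 0 \<and> nk (Suc k) = Suc (nk k)"
proof -
  have ml: "k mod T < T" using T0 by simp
  assume "\<not> lastt k"
  then have "Suc (k mod T) \<noteq> T" unfolding lastt_def by simp
  then show "tk (Suc k) = Suc (tk k) \<and> nk (Suc k) = nk k"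
    unfolding tk_def nk_def by (simp add: mod_Suc div_Suc)
next
  assume "lastt k"
  then have "Suc (k mod T) = T" unfolding lastt_def using T0 by simp
  then show "tk (Suc k) = 0 \<and> nk (Suc k) = Suc (nk k)"
    unfolding tk_def nk_def by (simp add: mod_Suc div_Suc)
qed

lemma idx_last:
  assumes "Suc k = T*N"
  shows "lastt k \<and> nk k = N - 1 \<and> tk k = T - 1"
proof -
  obtain T' where T': "T = Suc T'" using T0 by (cases T) auto
  obtain N' where N': "N = Suc N'" using N0 by (cases N) auto
  have kk: "k = T' + N' * T" using assms unfolding T' N' by (simp add: algebra_simps)
  have lt: "T' < T" "T \<noteq> 0" using T' by simp_all
  have "k mod T = T'" unfolding kk using lt by simp
  moreover have "k div T = N'" unfolding kk using lt by simp
  ultimately have "k mod T = T - 1" "k div T = N - 1" using T' N' by simp_all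
  then show ?thesis unfolding lastt_def tk_def nk_def by simp
qed

lemma netw_len: "length netw = Suc (T*N)" unfolding netw_def by simp

lemma netw_nth0: "netw ! 0 = (idA, \<xi>0)" unfolding netw_def by simp
lemma netw_nthS: "k < T*N \<Longrightarrow> netw ! Suc k = (\<theta>k k, \<xi>k k)" unfolding netw_def by simp

lemma params:
  "\<forall>l<length netw. a_din (fst (netw ! l)) \<le> d + 3 * d' \<and> a_dhead (fst (netw ! l)) = 1 \<and>
                          a_k (fst (netw ! l)) = 1 \<and> a_H (fst (netw ! l)) \<le> d'"
proof (intro allI impI)
  fix l assume l: "l < length netw"
  show "a_din (fst (netw ! l)) \<le> d + 3 * d' \<and> a_dhead (fst (netw ! l)) = 1 \<and>
                          a_k (fst (netw ! l)) = 1 \<and> a_H (fst (netw ! l)) \<le> d'"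
  proof (cases l)
    case 0 then show ?thesis by (simp add: netw_nth0 idA_def)
  next
    case (Suc k)
    then have k: "k < T*N" using l netw_len by simp
    then show ?thesis using Suc tk_nk_lt[OF k] \<theta>dim
      by (simp add: netw_nthS \<theta>k_def shiftA_def D_def)
  qed
qed

lemma dims: "dims_compatible d d' netw"
  unfolding dims_compatible_def
proof (intro conjI allI impI)
  show "netw \<noteq> []" unfolding netw_def by simp
  show "a_din (fst (hd netw)) = d" unfolding netw_def by (simp add: idA_def)
  fix l assume l: "l < length netw"
  have TN: "0 < T*N" using T0 N0 by simp
  show "mlp_wf (snd (netw ! l))"
  proof (cases l)
    case 0 then show ?thesis by (simp add: netw_nth0 \<xi>0_def gmlp_wf)
  next
    case (Suc k) then show ?thesis using l netw_len by (simp add: netw_nthS \<xi>k_def gmlp_wf)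
  qed
  show "mlp_in (snd (netw ! l)) = a_din (fst (netw ! l))"
  proof (cases l)
    case 0 then show ?thesis by (simp add: netw_nth0 \<xi>0_def gmlp_wf idA_def)
  next
    case (Suc k) then show ?thesis using l netw_len by (simp add: netw_nthS \<xi>k_def gmlp_wf \<theta>k_def shiftA_def)
  qed
  show "mlp_out (snd (netw ! l)) = (if Suc l < length netw then a_din (fst (netw ! Suc l)) else d')"
  proof (cases l)
    case 0 then show ?thesis using TN netw_len
      by (simp add: netw_nth0 netw_nthS \<xi>0_def gmlp_wf \<theta>k_def shiftA_def)
  next
    case (Suc k) then show ?thesis using l netw_len
      by (simp add: netw_nthS \<xi>k_def gmlp_wf \<theta>k_def shiftA_def)
  qed
qed

end

lemma step_err:
  fixes m :: "real \<Rightarrow> real \<Rightarrow> real"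
  assumes B1: "1 \<le> B" and d0: "0 \<le> \<delta>" and t: "t < T" and ds: "\<delta> * real T * B^T \<le> 1"
    and aP: "\<bar>a - P\<bar> \<le> \<delta> * real t * B^t" and P: "\<bar>P\<bar> \<le> B^t" and f: "\<bar>f\<bar> \<le> B"
    and mok: "\<forall>a b. \<bar>a\<bar> \<le> B^T + 1 \<longrightarrow> \<bar>b\<bar> \<le> B^T + 1 \<longrightarrow> \<bar>m a b - a*b\<bar> \<le> \<delta>"
  shows "\<bar>m a f - P*f\<bar> \<le> \<delta> * real (Suc t) * B^(Suc t)"
proof -
  have Bt: "B^t \<le> B^T" using B1 t by (intro power_increasing) auto
  have BT: "B \<le> B^T" using power_increasing[of 1 T B] B1 t by simp
  have "\<delta> * real t \<le> \<delta> * real T" using d0 t by (intro mult_left_mono) auto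
  then have "\<delta> * real t * B^t \<le> \<delta> * real T * B^T"
    using Bt d0 B1 t by (intro mult_mono) auto
  then have e1: "\<delta> * real t * B^t \<le> 1" using ds by linarith
  have "\<bar>a\<bar> \<le> \<bar>P\<bar> + \<bar>a - P\<bar>" by linarith
  then have a: "\<bar>a\<bar> \<le> B^T + 1" using P aP e1 Bt by linarith
  have fb: "\<bar>f\<bar> \<le> B^T + 1" using f BT by linarith
  have m1: "\<bar>m a f - a*f\<bar> \<le> \<delta>" using mok a fb by blast
  have "\<bar>a*f - P*f\<bar> = \<bar>a - P\<bar> * \<bar>f\<bar>" by (simp add: abs_mult left_diff_distrib[symmetric])
  also have "\<dots> \<le> (\<delta> * real t * B^t) * B"
    using aP f by (intro mult_mono) auto
  finally have m2: "\<bar>a*f - P*f\<bar> \<le> \<delta> * real t * B^(Suc t)" by (simp add: algebra_simps)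
  have "1 \<le> B^(Suc t)" using B1 by (rule one_le_power)
  then have "\<delta> \<le> \<delta> * B^(Suc t)" using d0 by (simp add: mult_le_cancel_left1)
  then have "\<bar>m a f - P*f\<bar> \<le> \<delta> * B^(Suc t) + \<delta> * real t * B^(Suc t)" using m1 m2 by linarith
  then show ?thesis by (simp add: algebra_simps)
qed

lemma abs_add_le: "\<bar>x\<bar> \<le> a \<Longrightarrow> \<bar>y\<bar> \<le> b \<Longrightarrow> \<bar>x + y\<bar> \<le> a + (b::real)" by linarith

lemma aff_cong: "af_in F = d \<Longrightarrow> (\<forall>l<d. w l = w' l) \<Longrightarrow> aff_eval F w = aff_eval F w'"
  unfolding aff_eval_def by (intro ext) simp

lemma prod_bound: "(\<forall>t<n. \<bar>f t\<bar> \<le> (B::real)) \<Longrightarrow> \<bar>\<Prod>t<n. f t\<bar> \<le> B^n"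
proof (induction n)
  case 0 then show ?case by simp
next
  case (Suc n)
  then have "\<bar>\<Prod>t<n. f t\<bar> \<le> B^n" "\<bar>f n\<bar> \<le> B" by auto
  then show ?case by (simp add: abs_mult mult_mono' mult.commute)
qed

locale net_an = net +
  fixes \<Omega> :: "vec set" and B \<delta> :: real
  assumes B1: "1 \<le> B"
    and Bfac: "\<forall>t<T. \<forall>n<N. \<forall>\<mu>\<in>prob_measures_on \<Omega>. \<forall>z\<in>\<Omega>. \<forall>i.
        \<bar>Gamma (\<theta>t t n) (distr \<mu> borel (aff_eval (Ft t n))) (aff_eval (Ft t n) z) i\<bar> \<le> B"
    and mok: "\<forall>a b. \<bar>a\<bar> \<le> B^T + 1 \<longrightarrow> \<bar>b\<bar> \<le> B^T + 1 \<longrightarrow> \<bar>mapp K u c a b - a*b\<bar> \<le> \<delta>"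
    and d0: "0 \<le> \<delta>" and ds: "\<delta> * real T * B^T \<le> 1"
begin

definition "fac \<mu> n t z i = Gamma (\<theta>t t n) (distr \<mu> borel (aff_eval (Ft t n))) (aff_eval (Ft t n) z) i"
definition "E = \<delta> * real T * B^T"

definition "Inv \<mu> k s \<longleftrightarrow> s \<in> borel_measurable borel \<and> (\<forall>z. \<forall>j<d. s z j = z j) \<and>
   (\<forall>z. \<forall>i<d'. s z (pF i) = aff_eval (Ft (tk k) (nk k)) z i) \<and>
   (\<forall>z\<in>\<Omega>. \<forall>i<d'. \<bar>s z (d+i) - (\<Sum>n'<nk k. \<Prod>t<T. fac \<mu> n' t z i)\<bar> \<le> real (nk k) * E \<and>
                   \<bar>s z (pP i) - (\<Prod>t<tk k. fac \<mu> (nk k) t z i)\<bar> \<le> \<delta> * real (tk k) * B^(tk k))"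

lemma attn_step:
  assumes \<mu>: "\<mu> \<in> prob_measures_on \<Omega>" and k: "k < T*N" and I: "Inv \<mu> k s"
  shows "\<And>z j. j < d + 2*d' \<Longrightarrow> Gamma (\<theta>k k) (distr \<mu> borel s) (s z) j = s z j"
    and "\<And>z i. i < d' \<Longrightarrow> Gamma (\<theta>k k) (distr \<mu> borel s) (s z) (pF i) = fac \<mu> (nk k) (tk k) z i"
proof -
  define \<theta> where "\<theta> = \<theta>t (tk k) (nk k)"
  have tn: "tk k < T" "nk k < N" using tk_nk_lt[OF k] by auto
  have din: "a_din \<theta> = d'" unfolding \<theta>_def using \<theta>dim tn by simp
  have Fd: "af_in (Ft (tk k) (nk k)) = d" "af_out (Ft (tk k) (nk k)) = d'" using Fdim tn by auto
  have th: "\<theta>k k = shiftA (d + 2*d') ((d + 2*d') + d') \<theta>" unfolding \<theta>k_def \<theta>_def D_def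
    by (simp add: algebra_simps)
  show "\<And>z j. j < d + 2*d' \<Longrightarrow> Gamma (\<theta>k k) (distr \<mu> borel s) (s z) j = s z j"
    unfolding th by (rule Gamma_shift_low[OF _ din])
  fix z i assume i: "i < d'"
  have ps: "prob_space \<mu>" and sets: "sets \<mu> = sets borel" using \<mu> unfolding prob_measures_on_def by auto
  have sm: "s \<in> measurable \<mu> borel" unfolding measurable_cong_sets[OF sets refl] using I Inv_def by blast
  have ts: "trunc (d + 2*d') d' \<circ> s = aff_eval (Ft (tk k) (nk k))"
  proof (rule ext)+
    fix y j
    show "(trunc (d + 2*d') d' \<circ> s) y j = aff_eval (Ft (tk k) (nk k)) y j"
      using I Fd unfolding Inv_def by (cases "j < d'") (auto simp: trunc_def pF_def aff_eval_def)
  qed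
  have "Gamma (\<theta>k k) (distr \<mu> borel s) (s z) (pF i)
      = Gamma \<theta> (distr (distr \<mu> borel s) borel (trunc (d + 2*d') d')) (trunc (d + 2*d') d' (s z)) i"
    unfolding th pF_def by (rule Gamma_shift[OF _ din i]) simp
  also have "distr (distr \<mu> borel s) borel (trunc (d + 2*d') d') = distr \<mu> borel (aff_eval (Ft (tk k) (nk k)))"
    using distr_distr[OF trunc_meas sm] ts by simp
  also have "trunc (d + 2*d') d' (s z) = aff_eval (Ft (tk k) (nk k)) z" using fun_cong[OF ts, of z] by simp
  finally show "Gamma (\<theta>k k) (distr \<mu> borel s) (s z) (pF i) = fac \<mu> (nk k) (tk k) z i"
    unfolding fac_def \<theta>_def .
qed


lemma step_core:
  assumes \<mu>: "\<mu> \<in> prob_measures_on \<Omega>" and k: "k < T*N" and I: "Inv \<mu> k s"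
    and z: "z \<in> \<Omega>" and i: "i < d'" and g_def: "g = (\<lambda>z. Gamma (\<theta>k k) (distr \<mu> borel s) (s z))"
  shows "\<bar>mapp K u c (g z (pP i)) (g z (pF i)) - (\<Prod>t<Suc (tk k). fac \<mu> (nk k) t z i)\<bar>
            \<le> \<delta> * real (Suc (tk k)) * B^(Suc (tk k))"
    and "g z (pP i) = s z (pP i)" and "g z (d + i) = s z (d + i)"
proof -
  have tn: "tk k < T" "nk k < N" using tk_nk_lt[OF k] by auto
  have gP: "g z (pP i) = s z (pP i)" unfolding g_def using attn_step(1)[OF \<mu> k I, of "pP i" z] i by (simp add: pP_def)
  then show "g z (pP i) = s z (pP i)" .
  show "g z (d + i) = s z (d + i)" unfolding g_def using attn_step(1)[OF \<mu> k I, of "d + i" z] i by simp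
  have gF: "g z (pF i) = fac \<mu> (nk k) (tk k) z i" unfolding g_def using attn_step(2)[OF \<mu> k I i] .
  have fb: "\<bar>fac \<mu> n t z i\<bar> \<le> B" if "t < T" "n < N" for n t using Bfac that \<mu> z unfolding fac_def by blast
  have Pb: "\<bar>\<Prod>t<tk k. fac \<mu> (nk k) t z i\<bar> \<le> B^(tk k)" using fb tn by (intro prod_bound) auto
  have aP: "\<bar>s z (pP i) - (\<Prod>t<tk k. fac \<mu> (nk k) t z i)\<bar> \<le> \<delta> * real (tk k) * B^(tk k)"
    using I z i unfolding Inv_def by blast
  have "\<bar>mapp K u c (s z (pP i)) (fac \<mu> (nk k) (tk k) z i) - (\<Prod>t<tk k. fac \<mu> (nk k) t z i) * fac \<mu> (nk k) (tk k) z i\<bar>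
       \<le> \<delta> * real (Suc (tk k)) * B^(Suc (tk k))"
    by (rule step_err[OF B1 d0 tn(1) ds aP Pb fb[OF tn] mok])
  then show "\<bar>mapp K u c (g z (pP i)) (g z (pF i)) - (\<Prod>t<Suc (tk k). fac \<mu> (nk k) t z i)\<bar>
            \<le> \<delta> * real (Suc (tk k)) * B^(Suc (tk k))"
    unfolding gP gF by simp
qed

lemma step_meas:
  assumes \<mu>: "\<mu> \<in> prob_measures_on \<Omega>" and sm: "s \<in> borel_measurable borel"
  shows "(\<lambda>z. mlp_eval \<xi> (Gamma \<theta> (distr \<mu> borel s) (s z))) \<in> borel_measurable borel"
proof -
  have ps: "prob_space \<mu>" and sets: "sets \<mu> = sets borel" using \<mu> unfolding prob_measures_on_def by auto
  have sm': "s \<in> measurable \<mu> borel" unfolding measurable_cong_sets[OF sets refl] by (rule sm)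
  have "prob_space (distr \<mu> borel s)" by (rule prob_space.prob_space_distr[OF ps sm'])
  then have fm: "finite_measure (distr \<mu> borel s)" by (simp add: prob_space_def)
  have "(\<lambda>z. mlp_eval \<xi> (Gamma \<theta> (distr \<mu> borel s) (s z))) = mlp_eval \<xi> \<circ> (Gamma \<theta> (distr \<mu> borel s) \<circ> s)"
    by auto
  also have "\<dots> \<in> borel_measurable borel"
    by (intro measurable_comp[OF measurable_comp[OF sm Gamma_meas[OF fm]] mlp_meas]) simp
  finally show ?thesis .
qed


lemma step_inv:
  assumes \<mu>: "\<mu> \<in> prob_measures_on \<Omega>" and k: "Suc k < T*N" and I: "Inv \<mu> k s"
  shows "Inv \<mu> (Suc k) (\<lambda>z. mlp_eval (\<xi>k k) (Gamma (\<theta>k k) (distr \<mu> borel s) (s z)))"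
proof -
  define g where "g = (\<lambda>z. Gamma (\<theta>k k) (distr \<mu> borel s) (s z))"
  have k': "k < T*N" using k by simp
  have tn: "tk k < T" "nk k < N" using tk_nk_lt[OF k'] by auto
  have tn1: "tk (Suc k) < T" "nk (Suc k) < N" using tk_nk_lt[OF k] by auto
  have gx: "g z j = z j" if "j < d" for z j
    using attn_step(1)[OF \<mu> k' I, of j z] I that unfolding g_def Inv_def by auto
  note core = step_core[OF \<mu> k' I]
  have "Inv \<mu> (Suc k) (\<lambda>z. mlp_eval (\<xi>k k) (g z))"
    unfolding Inv_def
  proof (intro conjI allI impI ballI)
    show "(\<lambda>z. mlp_eval (\<xi>k k) (g z)) \<in> borel_measurable borel"
    proof -
      have sm: "s \<in> borel_measurable borel" using I unfolding Inv_def by blast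
      show ?thesis unfolding g_def by (rule step_meas[OF \<mu> sm])
    qed
    fix z
    show "mlp_eval (\<xi>k k) (g z) j = z j" if "j < d" for j using that gx by (simp add: Ek[OF k])
    show "mlp_eval (\<xi>k k) (g z) (pF i) = aff_eval (Ft (tk (Suc k)) (nk (Suc k))) z i" if i: "i < d'" for i
    proof -
      have "mlp_eval (\<xi>k k) (g z) (pF i) = aff_eval (Ft (tk (Suc k)) (nk (Suc k))) (g z) i"
        using i by (simp add: Ek[OF k] pF_def D_def)
      also have "\<dots> = aff_eval (Ft (tk (Suc k)) (nk (Suc k))) z i"
        using aff_cong[where F="Ft (tk (Suc k)) (nk (Suc k))" and w="g z" and w'=z and d=d] Fdim tn1 gx by simp
      finally show ?thesis .
    qed
  next
    fix z i assume z: "z \<in> \<Omega>" and i: "i < d'"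
    note c = core[OF z i g_def]
    have eS: "mlp_eval (\<xi>k k) (g z) (d + i) = s z (d + i) + (if lastt k then mapp K u c (g z (pP i)) (g z (pF i)) else 0)"
      using i c(3) by (simp add: Ek[OF k] g_def)
    have eP: "mlp_eval (\<xi>k k) (g z) (pP i) = (if lastt k then 1 else mapp K u c (g z (pP i)) (g z (pF i)))"
      using i by (simp add: Ek[OF k] pP_def)
    have oldS: "\<bar>s z (d+i) - (\<Sum>n'<nk k. \<Prod>t<T. fac \<mu> n' t z i)\<bar> \<le> real (nk k) * E"
      using I z i unfolding Inv_def by blast
    have conj: "\<bar>mlp_eval (\<xi>k k) (g z) (d + i) - (\<Sum>n'<nk (Suc k). \<Prod>t<T. fac \<mu> n' t z i)\<bar> \<le> real (nk (Suc k)) * E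
      \<and> \<bar>mlp_eval (\<xi>k k) (g z) (pP i) - (\<Prod>t<tk (Suc k). fac \<mu> (nk (Suc k)) t z i)\<bar> \<le> \<delta> * real (tk (Suc k)) * B^(tk (Suc k))"
    proof (cases "lastt k")
      case False
      note ix = idx_next(1)[OF False]
      show ?thesis unfolding eS eP using False oldS c(1) ix by simp
    next
      case True
      note ix = idx_next(2)[OF True]
      have T1: "Suc (tk k) = T" using True T0 unfolding lastt_def tk_def by simp
      have "\<bar>s z (d+i) + mapp K u c (g z (pP i)) (g z (pF i)) - (\<Sum>n'<Suc (nk k). \<Prod>t<T. fac \<mu> n' t z i)\<bar>
          = \<bar>(s z (d+i) - (\<Sum>n'<nk k. \<Prod>t<T. fac \<mu> n' t z i))
             + (mapp K u c (g z (pP i)) (g z (pF i)) - (\<Prod>t<Suc (tk k). fac \<mu> (nk k) t z i))\<bar>"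
        unfolding T1 by simp
      also have "\<dots> \<le> real (nk k) * E + E" using abs_add_le[OF oldS c(1)[unfolded T1]] unfolding E_def T1 .
      finally show ?thesis unfolding eS eP using True ix by (simp add: algebra_simps)
    qed
    then show "\<bar>mlp_eval (\<xi>k k) (g z) (d + i) - (\<Sum>n'<nk (Suc k). \<Prod>t<T. fac \<mu> n' t z i)\<bar> \<le> real (nk (Suc k)) * E" by blast
    from conj show "\<bar>mlp_eval (\<xi>k k) (g z) (pP i) - (\<Prod>t<tk (Suc k). fac \<mu> (nk (Suc k)) t z i)\<bar> \<le> \<delta> * real (tk (Suc k)) * B^(tk (Suc k))" by blast
  qed
  then show ?thesis unfolding g_def .
qed

lemma final_step:
  assumes \<mu>: "\<mu> \<in> prob_measures_on \<Omega>" and k: "Suc k = T*N" and I: "Inv \<mu> k s"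
    and z: "z \<in> \<Omega>" and i: "i < d'"
  shows "\<bar>mlp_eval (\<xi>k k) (Gamma (\<theta>k k) (distr \<mu> borel s) (s z)) i - (\<Sum>n<N. \<Prod>t<T. fac \<mu> n t z i)\<bar> \<le> real N * E"
proof -
  define g where "g = (\<lambda>z. Gamma (\<theta>k k) (distr \<mu> borel s) (s z))"
  have k': "k < T*N" using k by simp
  note c = step_core[OF \<mu> k' I z i g_def]
  note ix = idx_last[OF k]
  have T1: "Suc (tk k) = T" using ix T0 by simp
  have N1: "Suc (nk k) = N" using ix N0 by simp
  have oldS: "\<bar>s z (d+i) - (\<Sum>n'<nk k. \<Prod>t<T. fac \<mu> n' t z i)\<bar> \<le> real (nk k) * E"
    using I z i unfolding Inv_def by blast
  have "mlp_eval (\<xi>k k) (g z) i = s z (d+i) + mapp K u c (g z (pP i)) (g z (pF i))"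
    using i c(3) by (simp add: Ef[OF k] g_def)
  then have "\<bar>mlp_eval (\<xi>k k) (g z) i - (\<Sum>n<N. \<Prod>t<T. fac \<mu> n t z i)\<bar>
     = \<bar>(s z (d+i) - (\<Sum>n'<nk k. \<Prod>t<T. fac \<mu> n' t z i))
             + (mapp K u c (g z (pP i)) (g z (pF i)) - (\<Prod>t<Suc (tk k). fac \<mu> (nk k) t z i))\<bar>"
    unfolding T1 N1[symmetric] by simp
  also have "\<dots> \<le> real (nk k) * E + E" using abs_add_le[OF oldS c(1)[unfolded T1]] unfolding E_def T1 .
  also have "\<dots> = real N * E" using N1 by (simp add: algebra_simps flip: N1)
  finally show ?thesis unfolding g_def .
qed

end

context net_an begin

definition "stp k = (\<theta>k k, \<xi>k k)"

lemma run_inv: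
  assumes \<mu>: "\<mu> \<in> prob_measures_on \<Omega>"
  shows "T*N - Suc k = m \<Longrightarrow> Suc k \<le> T*N \<Longrightarrow> Inv \<mu> k s \<Longrightarrow>
    \<forall>z\<in>\<Omega>. \<forall>i<d'. \<bar>run (map stp [k..<T*N]) \<mu> s z i - (\<Sum>n<N. \<Prod>t<T. fac \<mu> n t z i)\<bar> \<le> real N * E"
proof (induction m arbitrary: k s)
  case 0
  then have k: "Suc k = T*N" by simp
  have "[k..<T*N] = [k]" using k by (simp add: upt_conv_Cons)
  then show ?case using final_step[OF \<mu> k 0(3)] by (simp add: stp_def)
next
  case (Suc m)
  then have k: "Suc k < T*N" by simp
  have "[k..<T*N] = k # [Suc k..<T*N]" using k by (simp add: upt_conv_Cons)
  then have "run (map stp [k..<T*N]) \<mu> s = run (map stp [Suc k..<T*N]) \<mu> (\<lambda>z. mlp_eval (\<xi>k k) (Gamma (\<theta>k k) (distr \<mu> borel s) (s z)))"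
    by (simp add: stp_def)
  moreover have "T*N - Suc (Suc k) = m" using Suc.prems(1) by simp
  ultimately show ?case using Suc.IH[of "Suc k"] k step_inv[OF \<mu> k Suc.prems(3)] by simp
qed

lemma init_inv:
  assumes \<mu>: "\<mu> \<in> prob_measures_on \<Omega>"
  shows "Inv \<mu> 0 (\<lambda>z. mlp_eval \<xi>0 (Gamma idA (distr \<mu> borel (\<lambda>x. x)) z))"
proof -
  define g where "g = Gamma idA (distr \<mu> borel (\<lambda>x. x))"
  have g: "g z j = (if j < d then z j else 0)" for z j unfolding g_def Gamma_def by (simp add: idA_def)
  have t0: "tk 0 = 0" "nk 0 = 0" unfolding tk_def nk_def by simp_all
  have "Inv \<mu> 0 (\<lambda>z. mlp_eval \<xi>0 (g z))"
    unfolding Inv_def t0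
  proof (intro conjI allI impI ballI)
    show "(\<lambda>z. mlp_eval \<xi>0 (g z)) \<in> borel_measurable borel"
      unfolding g_def using step_meas[OF \<mu>, of "\<lambda>x. x" \<xi>0 idA] by simp
    fix z
    show "mlp_eval \<xi>0 (g z) j = z j" if "j < d" for j using that by (simp add: E0 g)
    show "mlp_eval \<xi>0 (g z) (pF i) = aff_eval (Ft 0 0) z i" if i: "i < d'" for i
    proof -
      have "mlp_eval \<xi>0 (g z) (pF i) = aff_eval (Ft 0 0) (g z) i" using i by (simp add: E0 pF_def D_def)
      also have "\<dots> = aff_eval (Ft 0 0) z i"
        using aff_cong[where F="Ft 0 0" and w="g z" and w'=z and d=d] Fdim T0 N0 g by simp
      finally show ?thesis .
    qed
  next
    fix z i assume "z \<in> \<Omega>" "i < d'"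
    then show "\<bar>mlp_eval \<xi>0 (g z) (d + i) - (\<Sum>n'<0. \<Prod>t<T. fac \<mu> n' t z i)\<bar> \<le> real 0 * E"
      "\<bar>mlp_eval \<xi>0 (g z) (pP i) - (\<Prod>t<0. fac \<mu> 0 t z i)\<bar> \<le> \<delta> * real 0 * B ^ 0"
      by (simp_all add: E0 pP_def)
  qed
  then show ?thesis unfolding g_def .
qed

lemma netw_err:
  assumes \<mu>: "\<mu> \<in> prob_measures_on \<Omega>" and z: "z \<in> \<Omega>" and i: "i < d'"
  shows "\<bar>tnet netw \<mu> z i - (\<Sum>n<N. \<Prod>t<T. fac \<mu> n t z i)\<bar> \<le> real N * E"
proof -
  have ps: "prob_space \<mu>" and sets: "sets \<mu> = sets borel" using \<mu> unfolding prob_measures_on_def by auto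
  have "tnet netw \<mu> z = run netw \<mu> (\<lambda>x. x) z" by (rule tnet_run0[OF ps sets])
  also have "\<dots> = run (map stp [0..<T*N]) \<mu> (\<lambda>z. mlp_eval \<xi>0 (Gamma idA (distr \<mu> borel (\<lambda>x. x)) z)) z"
    unfolding netw_def stp_def by simp
  finally have e: "tnet netw \<mu> z = \<dots>" .
  have TN: "Suc 0 \<le> T*N" using T0 N0 by simp
  show ?thesis unfolding e using run_inv[OF \<mu> refl TN init_inv[OF \<mu>]] z i by blast
qed

end

definition "idAtt d = \<lparr>a_din = d, a_dhead = 1, a_k = 1, a_H = 0, a_W = (\<lambda>_ _ _. 0),
   a_K = (\<lambda>_ _ _. 0), a_Q = (\<lambda>_ _ _. 0), a_V = (\<lambda>_ _ _. 0)\<rparr>"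

lemma vnorm_bound:
  assumes "\<forall>i<n. \<bar>v i\<bar> \<le> c" "0 \<le> c"
  shows "vnorm n v \<le> sqrt (real n) * c"
proof -
  have "(\<Sum>i<n. (v i)^2) \<le> (\<Sum>i<n. c^2)"
    using assms by (intro sum_mono) (simp add: abs_le_square_iff[symmetric] power2_le_iff_abs_le)
  then have "vnorm n v \<le> sqrt (real n * c^2)" unfolding vnorm_def by simp
  also have "\<dots> = sqrt (real n) * c" using assms(2) by (simp add: real_sqrt_mult)
  finally show ?thesis .
qed

lemma degenerate:
  fixes c0 :: real
  shows "dims_compatible d d' [(idAtt d, [\<lparr>af_in = d, af_out = d', af_A = \<lambda>_ _. 0, af_b = \<lambda>_. c0\<rparr>])]"
    and "tnet [(idAtt d, [\<lparr>af_in = d, af_out = d', af_A = \<lambda>_ _. 0, af_b = \<lambda>_. c0\<rparr>])] \<mu> x i = (if i < d' then c0 else 0)"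
  unfolding dims_compatible_def mlp_wf_def mlp_in_def mlp_out_def
  by (auto simp: idAtt_def ctx_comp_def aff_eval_def)

theorem lemma3p5:
  fixes d d' T N :: nat
    and \<Omega> :: "vec set"
    and Ft :: "nat \<Rightarrow> nat \<Rightarrow> affmap"
    and \<theta>t :: "nat \<Rightarrow> nat \<Rightarrow> attn_param"
    and G :: "vec measure \<Rightarrow> vec \<Rightarrow> vec"
    and \<epsilon> :: real
  assumes "compact \<Omega>"
    and "\<forall>x\<in>\<Omega>. \<forall>i\<ge>d. x i = 0"
    and "\<forall>t<T. \<forall>n<N. af_in (Ft t n) = d \<and> af_out (Ft t n) = d'"
    and "\<forall>t<T. \<forall>n<N. a_din (\<theta>t t n) = d' \<and> a_dhead (\<theta>t t n) = 1 \<and> a_k (\<theta>t t n) = 1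
                      \<and> a_H (\<theta>t t n) = d'"
    and "\<forall>\<mu> x. G \<mu> x = (\<lambda>i. if i < d' then
            (\<Sum>n<N. \<Prod>t<T. ctx_comp (Gamma (\<theta>t t n)) (\<lambda>\<mu>. aff_eval (Ft t n)) \<mu> x i) else 0)"
    and "\<epsilon> > 0"
  shows "\<exists>ps :: (attn_param \<times> affmap list) list.
           dims_compatible d d' ps \<and>
           (\<forall>l<length ps. a_din (fst (ps ! l)) \<le> d + 3 * d' \<and> a_dhead (fst (ps ! l)) = 1 \<and>
                          a_k (fst (ps ! l)) = 1 \<and> a_H (fst (ps ! l)) \<le> d') \<and>
           (\<forall>\<mu>\<in>prob_measures_on \<Omega>. \<forall>x\<in>\<Omega>. vnorm d' (\<lambda>i. G \<mu> x i - tnet ps \<mu> x i) \<le> \<epsilon>)"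
proof -
  note A = assms
  show ?thesis
  proof (cases "T = 0 \<or> N = 0")
    case True
    define c0 where "c0 = (if T = 0 then real N else 0)"
    let ?ps = "[(idAtt d, [\<lparr>af_in = d, af_out = d', af_A = \<lambda>_ _. 0, af_b = \<lambda>_. c0\<rparr>])]"
    have "G \<mu> x i = (if i < d' then c0 else 0)" for \<mu> x i
      using A(5) True unfolding c0_def by auto
    then have "vnorm d' (\<lambda>i. G \<mu> x i - tnet ?ps \<mu> x i) = 0" for \<mu> x
      unfolding vnorm_def degenerate(2) by simp
    moreover have "\<forall>l<length ?ps. a_din (fst (?ps ! l)) \<le> d + 3 * d' \<and> a_dhead (fst (?ps ! l)) = 1 \<and>
                          a_k (fst (?ps ! l)) = 1 \<and> a_H (fst (?ps ! l)) \<le> d'"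
      by (simp add: idAtt_def)
    ultimately show ?thesis using degenerate(1) A(6) by (intro exI[of _ ?ps]) auto
  next
    case False
    then have T0: "0 < T" and N0: "0 < N" by auto
    have "\<forall>t n. \<exists>B\<ge>0. \<forall>\<mu>\<in>prob_measures_on \<Omega>. \<forall>z\<in>\<Omega>. \<forall>i.
        \<bar>Gamma (\<theta>t t n) (distr \<mu> borel (aff_eval (Ft t n))) (aff_eval (Ft t n) z) i\<bar> \<le> B"
      using fac_bound[OF A(1)] by blast
    then obtain Bf where Bf: "\<And>t n. 0 \<le> Bf t n" "\<And>t n. \<forall>\<mu>\<in>prob_measures_on \<Omega>. \<forall>z\<in>\<Omega>. \<forall>i.
        \<bar>Gamma (\<theta>t t n) (distr \<mu> borel (aff_eval (Ft t n))) (aff_eval (Ft t n) z) i\<bar> \<le> Bf t n"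
      by metis
    define B where "B = 1 + (\<Sum>t<T. \<Sum>n<N. Bf t n)"
    have B1: "1 \<le> B" unfolding B_def using Bf(1) by (simp add: sum_nonneg)
    have BfB: "Bf t n \<le> B" if "t < T" "n < N" for t n
    proof -
      have "Bf t n \<le> (\<Sum>n<N. Bf t n)" using that Bf(1) by (intro member_le_sum) auto
      also have "\<dots> \<le> (\<Sum>t<T. \<Sum>n<N. Bf t n)" using that Bf(1)
        by (intro member_le_sum[where f="\<lambda>t. \<Sum>n<N. Bf t n"]) (auto intro: sum_nonneg)
      finally show ?thesis unfolding B_def by simp
    qed
    define \<eta> where "\<eta> = \<epsilon> / (sqrt (real d') + 1)"
    have \<eta>0: "0 < \<eta>" unfolding \<eta>_def using A(6) by (simp add: add_nonneg_pos)
    define Q where "Q = real N * real T * B^T"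
    have Q1: "1 \<le> Q"
    proof -
      have "0 < N*T" using T0 N0 by simp
      then have q1: "1 \<le> real N * real T" by (metis One_nat_def Suc_leI of_nat_1 of_nat_le_iff of_nat_mult)
      have q2: "1 \<le> B^T" by (rule one_le_power[OF B1])
      have "1 * 1 \<le> (real N * real T) * B^T" using q1 q2 by (intro mult_mono) auto
      then show ?thesis unfolding Q_def by simp
    qed
    define \<delta> where "\<delta> = min 1 \<eta> / Q"
    have \<delta>0: "0 < \<delta>" unfolding \<delta>_def using \<eta>0 Q1 by simp
    have \<delta>Q: "\<delta> * Q = min 1 \<eta>" unfolding \<delta>_def using Q1 by simp
    have ds: "\<delta> * real T * B^T \<le> 1"
    proof -
      have "\<delta> * real T * B^T \<le> \<delta> * Q" unfolding Q_def using \<delta>0 N0 T0 B1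
        by (simp add: mult_le_cancel_left1 mult.assoc mult_left_mono)
      then show ?thesis using \<delta>Q by simp
    qed
    have NE: "real N * (\<delta> * real T * B^T) \<le> \<eta>" using \<delta>Q unfolding Q_def by (simp add: algebra_simps)
    obtain K u c where mok: "\<forall>a b. \<bar>a\<bar> \<le> B^T + 1 \<longrightarrow> \<bar>b\<bar> \<le> B^T + 1 \<longrightarrow> \<bar>mapp K u c a b - a*b\<bar> \<le> \<delta>"
      using mapp_approx[of "B^T + 1" \<delta>] \<delta>0 B1 by (smt (verit) one_le_power)
    interpret net_an d d' T N Ft \<theta>t K u c \<Omega> B \<delta>
    proof
      show "0 < T" "0 < N" by (fact T0, fact N0)
      show "\<forall>t<T. \<forall>n<N. af_in (Ft t n) = d \<and> af_out (Ft t n) = d'" by (fact A(3))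
      show "\<forall>t<T. \<forall>n<N. a_din (\<theta>t t n) = d' \<and> a_dhead (\<theta>t t n) = 1 \<and> a_k (\<theta>t t n) = 1 \<and> a_H (\<theta>t t n) = d'"
        by (fact A(4))
      show "1 \<le> B" by (fact B1)
      show "\<forall>t<T. \<forall>n<N. \<forall>\<mu>\<in>prob_measures_on \<Omega>. \<forall>z\<in>\<Omega>. \<forall>i.
        \<bar>Gamma (\<theta>t t n) (distr \<mu> borel (aff_eval (Ft t n))) (aff_eval (Ft t n) z) i\<bar> \<le> B"
        using Bf(2) BfB by (meson order_trans)
      show "\<forall>a b. \<bar>a\<bar> \<le> B^T + 1 \<longrightarrow> \<bar>b\<bar> \<le> B^T + 1 \<longrightarrow> \<bar>mapp K u c a b - a*b\<bar> \<le> \<delta>" by (fact mok)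
      show "0 \<le> \<delta>" using \<delta>0 by simp
      show "\<delta> * real T * B^T \<le> 1" by (fact ds)
    qed
    have err: "vnorm d' (\<lambda>i. G \<mu> x i - tnet netw \<mu> x i) \<le> \<epsilon>" if \<mu>: "\<mu> \<in> prob_measures_on \<Omega>" and x: "x \<in> \<Omega>" for \<mu> x
    proof -
      have "\<forall>i<d'. \<bar>G \<mu> x i - tnet netw \<mu> x i\<bar> \<le> \<eta>"
      proof (intro allI impI)
        fix i assume i: "i < d'"
        have "G \<mu> x i = (\<Sum>n<N. \<Prod>t<T. fac \<mu> n t x i)" using A(5) i by (simp add: ctx_comp_def fac_def)
        then have "\<bar>G \<mu> x i - tnet netw \<mu> x i\<bar> \<le> real N * E" using netw_err[OF \<mu> x i] by (simp add: abs_minus_commute)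
        then show "\<bar>G \<mu> x i - tnet netw \<mu> x i\<bar> \<le> \<eta>" using NE unfolding E_def by linarith
      qed
      then have "vnorm d' (\<lambda>i. G \<mu> x i - tnet netw \<mu> x i) \<le> sqrt (real d') * \<eta>"
        using \<eta>0 by (intro vnorm_bound) auto
      also have "\<dots> \<le> \<epsilon>"
      proof -
        have "sqrt (real d') * \<eta> = \<epsilon> * (sqrt (real d') / (sqrt (real d') + 1))"
          unfolding \<eta>_def by (simp add: field_simps)
        also have "\<dots> \<le> \<epsilon> * 1"
        proof (intro mult_left_mono)
          have p: "0 < sqrt (real d') + 1" by (simp add: add_nonneg_pos)
          show "sqrt (real d') / (sqrt (real d') + 1) \<le> 1" using p by (simp add: divide_le_eq_1)
        qed (use A(6) in simp)
        finally show ?thesis by simp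
      qed
      finally show ?thesis .
    qed
    show ?thesis using dims params err by (intro exI[of _ netw]) auto
  qed
qed


end
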